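(* Let $d\ge1$, let $F$ be a finite simple graph with vertex set $\{1,\dots,m\}$, let $(W_{(k)})_{k\in\Lambda_d}$ be a multivariate graphon, and let $\mathbf G_n=(G_n^{(k)})_{k\in\Lambda_d}$ be obtained from exchangeable $d$-layer multiplex networks on $[n]$ generated by $(W_{(k)})$, converging in the joint cut metric to $(W_{(1)},\dots,W_{(d)})$. Fix $k\in\Lambda_d$ and define \[ \sigma^2(k,\mathbf G_n)=\frac{1}{|\mathrm{Aut}(F)|^2}\Big[\sum_{1\le a,b\le m}\widehat t\Big(F\bigoplus_{a,b}F,G_n^{(k)}\Big)-m^2\,\widehat t(F,G_n^{(k)})^2\Big], \] where $\widehat t(F\bigoplus_{a,b}F,G_n^{(k)})=\frac1n\sum_{v=1}^n\tilde t_a(v,F,G_n^{(k)})\,\tilde t_b(v,F,G_n^{(k)})$ and $\widehat t(F,G_n^{(k)})=\frac{1}{|[n]_m|}\sum_{s\in[n]_m}\prod_{(a,b)\in E(F)}A^{(k)}_{s_as_b}$. Then: (1) if $W_{(k)}$ is $F$-regular, $\sqrt n\,\sigma^2(k,\mathbf G_n)\xrightarrow{P}0$; (2) if $W_{(k)}$ is $F$-irregular, $\sqrt n\,\sigma^2(k,\mathbf G_n)\xrightarrow{P}\infty$.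
   Context: $\Lambda_d$: nonempty subsets of $[d]$; $S(k)$ the layers of $k$. Exchangeable multiplex model: $\xi_1,\dots,\xi_n$ i.i.d. uniform; given $\xi$, the vectors $(A^{(1)}_{ij},\dots,A^{(d)}_{ij})$, $i<j$, are independent $d$-variate Bernoulli with $\mathbb P(A^{(l)}_{ij}=1\ \forall l\in S(k)\mid\xi)=W_{(k)}(\xi_i,\xi_j)$ (graphons: symmetric measurable $[0,1]^2\to[0,1]$); $G_n^{(k)}$ has adjacency matrix $A^{(k)}=\bigcirc_{l\in S(k)}A^{(l)}$. Joint cut metric convergence: $\inf_\varphi\sum_{j=1}^d\|W^{G_n^{(j)}}\circ(\varphi\times\varphi)-W_{(j)}\|_\square\to0$ over measure-preserving bijections $\varphi$ of $[0,1]$, with $\|U\|_\square=\sup_{A,B\subseteq[0,1]}|\int_{A\times B}U|$ and $W^G(x,y)=\mathbf 1\{(\lceil nx\rceil,\lceil ny\rceil)\in E(G)\}$. $[n]_m$: ordered $m$-tuples of distinct elements of $[n]$. $\tilde t_a(v,F,G)=n^{-(m-1)}\#\{$injective homomorphisms $\varphi:F\to G$ with $\varphi(a)=v\}$. $F\bigoplus_{a,b}F$ is the graph obtained from two copies of $F$ by identifying vertex $a$ of the first with vertex $b$ of the second. For a graphon $W$ and i.i.d. uniform $U_1,\dots,U_m$: $t(F,W)=\mathbb E\prod_{(b,c)\in E(F)}W(U_b,U_c)$, $t_a(x,F,W)=\mathbb E[\prod W(U_b,U_c)\mid U_a=x]$; $W$ is $F$-regular if $\frac1m\sum_at_a(x,F,W)=t(F,W)$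 for a.e. $x$, and $F$-irregular otherwise. *)

theory Defs
  imports "HOL-Probability.Probability" "HOL-Combinatorics.Permutations"
begin

definition U01 :: "real measure" where
  "U01 = restrict_space lborel {0..1}"

definition graphon :: "(real \<Rightarrow> real \<Rightarrow> real) \<Rightarrow> bool" where
  "graphon W \<longleftrightarrow> (\<lambda>p. W (fst p) (snd p)) \<in> borel_measurable (U01 \<Otimes>\<^sub>M U01) \<and>
     (\<forall>x\<in>{0..1}. \<forall>y\<in>{0..1}. W x y = W y x \<and> 0 \<le> W x y \<and> W x y \<le> 1)"

text \<open>Lambda_d: nonempty subsets of [d] = {1..d}; an element k is identified with S(k).\<close>
definition Lambda :: "nat \<Rightarrow> nat set set" where
  "Lambda d = {S. S \<noteq> {} \<and> S \<subseteq> {1..d}}"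

definition multigraphon :: "nat \<Rightarrow> (nat set \<Rightarrow> real \<Rightarrow> real \<Rightarrow> real) \<Rightarrow> bool" where
  "multigraphon d W \<longleftrightarrow> (\<forall>S\<in>Lambda d. graphon (W S))"

text \<open>W extended by W_{empty} = 1 (no constraint).\<close>
definition Wt :: "(nat set \<Rightarrow> real \<Rightarrow> real \<Rightarrow> real) \<Rightarrow> nat set \<Rightarrow> real \<Rightarrow> real \<Rightarrow> real" where
  "Wt W S x y = (if S = {} then 1 else W S x y)"

definition simple_graph :: "nat \<Rightarrow> (nat \<times> nat) set \<Rightarrow> bool" where
  "simple_graph m E \<longleftrightarrow> E \<subseteq> {(a,b). 1 \<le> a \<and> a < b \<and> b \<le> m}"

definition fadj :: "(nat \<times> nat) set \<Rightarrow> nat \<Rightarrow> nat \<Rightarrow> bool" where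
  "fadj E a b \<longleftrightarrow> (a,b) \<in> E \<or> (b,a) \<in> E"

definition aut :: "nat \<Rightarrow> (nat \<times> nat) set \<Rightarrow> (nat \<Rightarrow> nat) set" where
  "aut m E = {\<pi>. \<pi> permutes {1..m} \<and>
     (\<forall>a\<in>{1..m}. \<forall>b\<in>{1..m}. fadj E a b \<longleftrightarrow> fadj E (\<pi> a) (\<pi> b))}"

definition inj_maps :: "nat \<Rightarrow> nat \<Rightarrow> (nat \<Rightarrow> nat) set" where
  "inj_maps m n = {s \<in> {1..m} \<rightarrow>\<^sub>E {1..n}. inj_on s {1..m}}"

definition inj_homs :: "nat \<Rightarrow> (nat \<times> nat) set \<Rightarrow> nat \<Rightarrow> (nat \<Rightarrow> nat \<Rightarrow> bool) \<Rightarrow> (nat \<Rightarrow> nat) set" where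
  "inj_homs m E n G = {\<phi> \<in> inj_maps m n. \<forall>(a,b)\<in>E. G (\<phi> a) (\<phi> b)}"

definition t_tilde :: "nat \<Rightarrow> nat \<Rightarrow> nat \<Rightarrow> (nat \<times> nat) set \<Rightarrow> nat \<Rightarrow> (nat \<Rightarrow> nat \<Rightarrow> bool) \<Rightarrow> real" where
  "t_tilde a v m E n G = real (card {\<phi> \<in> inj_homs m E n G. \<phi> a = v}) / real n ^ (m - 1)"

definition t_hat :: "nat \<Rightarrow> (nat \<times> nat) set \<Rightarrow> nat \<Rightarrow> (nat \<Rightarrow> nat \<Rightarrow> bool) \<Rightarrow> real" where
  "t_hat m E n G = (\<Sum>s\<in>inj_maps m n. \<Prod>(a,b)\<in>E. if G (s a) (s b) then 1 else 0)
                     / real (card (inj_maps m n))"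

definition t_hat_join :: "nat \<Rightarrow> nat \<Rightarrow> nat \<Rightarrow> (nat \<times> nat) set \<Rightarrow> nat \<Rightarrow> (nat \<Rightarrow> nat \<Rightarrow> bool) \<Rightarrow> real" where
  "t_hat_join a b m E n G = (\<Sum>v=1..n. t_tilde a v m E n G * t_tilde b v m E n G) / real n"

definition sigma2 :: "nat \<Rightarrow> (nat \<times> nat) set \<Rightarrow> nat \<Rightarrow> (nat \<Rightarrow> nat \<Rightarrow> bool) \<Rightarrow> real" where
  "sigma2 m E n G = (1 / real (card (aut m E)) ^ 2) *
     ((\<Sum>a=1..m. \<Sum>b=1..m. t_hat_join a b m E n G) - real m ^ 2 * t_hat m E n G ^ 2)"

definition hom_density :: "nat \<Rightarrow> (nat \<times> nat) set \<Rightarrow> (real \<Rightarrow> real \<Rightarrow> real) \<Rightarrow> real" where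
  "hom_density m E W = (\<integral>x. (\<Prod>(b,c)\<in>E. W (x b) (x c)) \<partial>(PiM {1..m} (\<lambda>_. U01)))"

text \<open>t_a(x,F,W) = E[prod W(U_b,U_c) | U_a = x], computed by fixing coordinate a to x.\<close>
definition hom_density_root :: "nat \<Rightarrow> real \<Rightarrow> nat \<Rightarrow> (nat \<times> nat) set \<Rightarrow> (real \<Rightarrow> real \<Rightarrow> real) \<Rightarrow> real" where
  "hom_density_root a x m E W =
     (\<integral>u. (\<Prod>(b,c)\<in>E. W ((u(a := x)) b) ((u(a := x)) c)) \<partial>(PiM ({1..m} - {a}) (\<lambda>_. U01)))"

definition F_regular :: "nat \<Rightarrow> (nat \<times> nat) set \<Rightarrow> (real \<Rightarrow> real \<Rightarrow> real) \<Rightarrow> bool" where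
  "F_regular m E W \<longleftrightarrow>
     (AE x in U01. (\<Sum>a=1..m. hom_density_root a x m E W) / real m = hom_density m E W)"

definition cut_norm :: "(real \<Rightarrow> real \<Rightarrow> real) \<Rightarrow> real" where
  "cut_norm U = Sup ((\<lambda>(A,B). \<bar>\<integral>p. indicator (A \<times> B) p * U (fst p) (snd p) \<partial>(U01 \<Otimes>\<^sub>M U01)\<bar>)
                       ` {(A,B). A \<in> sets U01 \<and> B \<in> sets U01})"

definition mp_map :: "(real \<Rightarrow> real) \<Rightarrow> bool" where
  "mp_map \<phi> \<longleftrightarrow> \<phi> \<in> measurable U01 U01 \<and> distr U01 U01 \<phi> = U01"

definition mp_bij :: "(real \<Rightarrow> real) \<Rightarrow> bool" where
  "mp_bij \<phi> \<longleftrightarrow> bij_betw \<phi> {0..1} {0..1} \<and> mp_map \<phi> \<and> mp_map (the_inv_into {0..1} \<phi>)"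

definition step_graphon :: "nat \<Rightarrow> (nat \<Rightarrow> nat \<Rightarrow> bool) \<Rightarrow> real \<Rightarrow> real \<Rightarrow> real" where
  "step_graphon n G x y = (if G (nat \<lceil>real n * x\<rceil>) (nat \<lceil>real n * y\<rceil>) then 1 else 0)"

definition joint_cut_dist ::
  "nat \<Rightarrow> nat \<Rightarrow> (nat \<Rightarrow> nat \<Rightarrow> nat \<Rightarrow> bool) \<Rightarrow> (nat set \<Rightarrow> real \<Rightarrow> real \<Rightarrow> real) \<Rightarrow> real" where
  "joint_cut_dist n d Gs W = Inf ((\<lambda>\<phi>. \<Sum>j=1..d.
       cut_norm (\<lambda>x y. step_graphon n (Gs j) (\<phi> x) (\<phi> y) - W {j} x y)) ` {\<phi>. mp_bij \<phi>})"

definition madj :: "nat \<Rightarrow> (nat \<Rightarrow> nat \<Rightarrow> bool) \<Rightarrow> nat \<Rightarrow> nat \<Rightarrow> bool" where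
  "madj n X i j \<longleftrightarrow> (1 \<le> i \<and> i < j \<and> j \<le> n \<and> X i j) \<or> (1 \<le> j \<and> j < i \<and> i \<le> n \<and> X j i)"

text \<open>Adjacency of G_n^(k): Hadamard product of the layers l in k.\<close>
definition layer_adj :: "nat \<Rightarrow> (nat \<Rightarrow> nat \<Rightarrow> nat \<Rightarrow> nat \<Rightarrow> 'a \<Rightarrow> bool) \<Rightarrow> nat set \<Rightarrow> 'a \<Rightarrow> nat \<Rightarrow> nat \<Rightarrow> bool" where
  "layer_adj n A k \<omega> = madj n (\<lambda>i j. \<forall>l\<in>k. A n l i j \<omega>)"

text \<open>For each n, xi n i (i in [n]) are the latent variables and A n l i j (i<j in [n], l in [d])
  the layer-l edge indicators. The joint law: xi_1..xi_n i.i.d. uniform on [0,1], and given xi the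
  pair vectors are independent with P(A^(l)_ij = 1 for all l in S | xi) = W_S(xi_i,xi_j).
  This is expressed via the (intersection-stable, generating) family of events below.\<close>
definition multiplex_model ::
  "'a measure \<Rightarrow> nat \<Rightarrow> (nat set \<Rightarrow> real \<Rightarrow> real \<Rightarrow> real) \<Rightarrow> (nat \<Rightarrow> nat \<Rightarrow> 'a \<Rightarrow> real)
     \<Rightarrow> (nat \<Rightarrow> nat \<Rightarrow> nat \<Rightarrow> nat \<Rightarrow> 'a \<Rightarrow> bool) \<Rightarrow> bool" where
  "multiplex_model M d W \<xi> A \<longleftrightarrow> prob_space M \<and>
     (\<forall>n i. \<xi> n i \<in> borel_measurable M) \<and>
     (\<forall>n l i j. A n l i j \<in> measurable M (count_space UNIV)) \<and>
     (\<forall>n B S. (\<forall>i. B i \<in> sets borel) \<longrightarrow> (\<forall>i j. S i j \<subseteq> {1..d}) \<longrightarrow>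
        measure M {\<omega> \<in> space M. (\<forall>i\<in>{1..n}. \<xi> n i \<omega> \<in> B i) \<and>
                     (\<forall>i j. 1 \<le> i \<and> i < j \<and> j \<le> n \<longrightarrow> (\<forall>l\<in>S i j. A n l i j \<omega>))}
        = (\<integral>x. (\<Prod>i\<in>{1..n}. indicator (B i) (x i)) *
               (\<Prod>(i,j)\<in>{(i,j). 1 \<le> i \<and> i < j \<and> j \<le> n}. Wt W (S i j) (x i) (x j))
             \<partial>(PiM {1..n} (\<lambda>_. U01))))"

end

theory Submission
  imports Defs
begin

lemma space_U01[simp]: "space U01 = {0..1}"
  by (simp add: U01_def)

lemma sets_U01: "sets U01 = sets (restrict_space borel {0..1::real})"
  by (simp add: U01_def sets_restrict_space)

lemma prob_space_U01: "prob_space U01"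
proof
  show "emeasure U01 (space U01) = 1"
    by (simp add: U01_def emeasure_restrict_space)
qed

interpretation U: product_sigma_finite "\<lambda>_::nat. U01"
  by (simp add: product_sigma_finite_def prob_space_U01 prob_space_imp_sigma_finite)

lemma prob_space_PiU: "prob_space (PiM I (\<lambda>_::nat. U01))"
  by (simp add: prob_space_PiM prob_space_U01)


abbreviation PU :: "nat set \<Rightarrow> (nat \<Rightarrow> real) measure" where
  "PU I \<equiv> PiM I (\<lambda>_. U01)"

lemma graphon_meas2:
  assumes "graphon w" "i \<in> I" "j \<in> I"
  shows "(\<lambda>x. w (x i) (x j)) \<in> borel_measurable (PU I)"
proof -
  have m: "(\<lambda>p. w (fst p) (snd p)) \<in> borel_measurable (U01 \<Otimes>\<^sub>M U01)"
    using assms(1) by (simp add: graphon_def)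
  have "(\<lambda>x. (x i, x j)) \<in> measurable (PU I) (U01 \<Otimes>\<^sub>M U01)"
    using assms(2,3) by (intro measurable_Pair) (auto intro: measurable_component_singleton)
  from measurable_compose[OF this m] show ?thesis by simp
qed

lemma graphon_bounds:
  assumes "graphon w" "x \<in> {0..1}" "y \<in> {0..1}"
  shows "0 \<le> w x y" "w x y \<le> 1" "w x y = w y x"
  using assms by (auto simp: graphon_def)

lemma space_PU_01: "x \<in> space (PU I) \<Longrightarrow> i \<in> I \<Longrightarrow> x i \<in> {0..1}"
  by (auto simp: space_PiM PiE_def Pi_def)

definition prodW :: "(real \<Rightarrow> real \<Rightarrow> real) \<Rightarrow> (nat \<times> nat) set \<Rightarrow> (nat \<Rightarrow> real) \<Rightarrow> real" where
  "prodW w P x = (\<Prod>(i,j)\<in>P. w (x i) (x j))"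

lemma prodW_meas:
  assumes "graphon w" "\<forall>(i,j)\<in>P. i \<in> I \<and> j \<in> I"
  shows "prodW w P \<in> borel_measurable (PU I)"
  unfolding prodW_def
  apply (rule borel_measurable_prod)
  using assms graphon_meas2 by auto

lemma prodW_bounds:
  assumes "graphon w" "\<forall>(i,j)\<in>P. i \<in> I \<and> j \<in> I" "x \<in> space (PU I)"
  shows "0 \<le> prodW w P x" "prodW w P x \<le> 1"
proof -
  have h: "\<And>a b. (a,b) \<in> P \<Longrightarrow> 0 \<le> w (x a) (x b) \<and> w (x a) (x b) \<le> 1"
  proof -
    fix a b assume "(a,b) \<in> P"
    then have "x a \<in> {0..1}" "x b \<in> {0..1}" using assms(2,3) space_PU_01 by auto
    then show "0 \<le> w (x a) (x b) \<and> w (x a) (x b) \<le> 1" using assms(1) by (auto simp: graphon_def)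
  qed
  show "0 \<le> prodW w P x" unfolding prodW_def by (rule prod_nonneg) (use h in auto)
  show "prodW w P x \<le> 1" unfolding prodW_def by (rule prod_le_1) (use h in auto)
qed

lemma bounded_integrable:
  fixes f :: "(nat \<Rightarrow> real) \<Rightarrow> real"
  assumes "f \<in> borel_measurable (PU I)" "\<And>x. x \<in> space (PU I) \<Longrightarrow> \<bar>f x\<bar> \<le> B"
  shows "integrable (PU I) f"
proof -
  interpret prob_space "PU I" by (rule prob_space_PiU)
  show ?thesis
    by (rule integrable_const_bound[where B=B]) (use assms in auto)
qed


lemma PU_prob: "prob_space (PU I)" by (rule prob_space_PiU)

lemma measure_space_PU[simp]: "measure (PU I) (space (PU I)) = 1"
proof -
  interpret prob_space "PU I" by (rule prob_space_PiU)
  show ?thesis by (simp add: prob_space)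
qed

lemma integral_const_PU: "(\<integral>y. (c::real) \<partial>PU I) = c"
proof -
  interpret prob_space "PU I" by (rule prob_space_PiU)
  show ?thesis by (simp add: prob_space)
qed

lemma fold_PU:
  fixes h :: "(nat \<Rightarrow> real) \<Rightarrow> real"
  assumes "finite I" "V \<subseteq> I" "integrable (PU I) h"
  shows "integral\<^sup>L (PU I) h = (\<integral>x. (\<integral>y. h (merge V (I - V) (x, y)) \<partial>PU (I - V)) \<partial>PU V)"
proof -
  have I: "I = V \<union> (I - V)" using assms(2) by auto
  have fin: "finite V" "finite (I - V)" using assms(1,2) finite_subset by auto
  have "integrable (PU (V \<union> (I - V))) h" using assms(3) I by simp
  from U.product_integral_fold[OF _ fin this] have
    "integral\<^sup>L (PU (V \<union> (I - V))) h = (\<integral>x. (\<integral>y. h (merge V (I - V) (x, y)) \<partial>PU (I - V)) \<partial>PU V)"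
    by auto
  then show ?thesis using I by simp
qed

lemma indep_blocks:
  fixes f g :: "(nat \<Rightarrow> real) \<Rightarrow> real"
  assumes fin: "finite I" and sub: "V1 \<subseteq> I" "V2 \<subseteq> I" and disj: "V1 \<inter> V2 = {}"
    and fm: "f \<in> borel_measurable (PU I)" and gm: "g \<in> borel_measurable (PU I)"
    and fb: "\<And>x. x \<in> space (PU I) \<Longrightarrow> \<bar>f x\<bar> \<le> B"
    and gb: "\<And>x. x \<in> space (PU I) \<Longrightarrow> \<bar>g x\<bar> \<le> B"
    and fV: "\<And>x. f x = f (restrict x V1)" and gV: "\<And>x. g x = g (restrict x V2)"
  shows "(\<integral>x. f x * g x \<partial>PU I) = (\<integral>x. f x \<partial>PU I) * (\<integral>x. g x \<partial>PU I)"
proof -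
  define J where "J = I - V1"
  define c where "c = (\<integral>y. g (restrict y V2) \<partial>PU J)"
  have mf: "\<And>x (y::nat\<Rightarrow>real). f (merge V1 J (x, y)) = f (restrict x V1)"
  proof -
    fix x y :: "nat \<Rightarrow> real"
    have "restrict (merge V1 J (x, y)) V1 = restrict x V1"
      by (auto simp: merge_def restrict_def)
    then show "f (merge V1 J (x, y)) = f (restrict x V1)" using fV by metis
  qed
  have mg: "\<And>(x::nat\<Rightarrow>real) y. g (merge V1 J (x, y)) = g (restrict y V2)"
  proof -
    fix x y :: "nat \<Rightarrow> real"
    have "restrict (merge V1 J (x, y)) V2 = restrict y V2"
      using disj sub by (auto simp: merge_def restrict_def J_def fun_eq_iff)
    then show "g (merge V1 J (x, y)) = g (restrict y V2)" using gV by metis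
  qed
  have ifg: "integrable (PU I) (\<lambda>x. f x * g x)"
  proof (rule bounded_integrable[where B="B*B"])
    show "(\<lambda>x. f x * g x) \<in> borel_measurable (PU I)" using fm gm by simp
    fix x assume x: "x \<in> space (PU I)"
    have "\<bar>f x * g x\<bar> = \<bar>f x\<bar> * \<bar>g x\<bar>" by (simp add: abs_mult)
    also have "\<dots> \<le> B * B" using fb[OF x] gb[OF x] by (intro mult_mono) auto
    finally show "\<bar>f x * g x\<bar> \<le> B * B" .
  qed
  have iff: "integrable (PU I) f" by (rule bounded_integrable[OF fm fb])
  have ig: "integrable (PU I) g" by (rule bounded_integrable[OF gm gb])
  have "(\<integral>x. f x * g x \<partial>PU I) = (\<integral>x. (\<integral>y. f (restrict x V1) * g (restrict y V2) \<partial>PU J) \<partial>PU V1)"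
    using fold_PU[OF fin sub(1) ifg] mf mg unfolding J_def by simp
  also have "\<dots> = (\<integral>x. f (restrict x V1) * c \<partial>PU V1)"
    unfolding c_def by simp
  also have "\<dots> = (\<integral>x. f (restrict x V1) \<partial>PU V1) * c" by simp
  finally have 1: "(\<integral>x. f x * g x \<partial>PU I) = (\<integral>x. f (restrict x V1) \<partial>PU V1) * c" .
  have 2: "(\<integral>x. f x \<partial>PU I) = (\<integral>x. f (restrict x V1) \<partial>PU V1)"
    using fold_PU[OF fin sub(1) iff] mf unfolding J_def by (simp add: integral_const_PU)
  have 3: "(\<integral>x. g x \<partial>PU I) = c"
    using fold_PU[OF fin sub(1) ig] mg unfolding J_def c_def by (simp add: integral_const_PU)
  show ?thesis using 1 2 3 by simp
qed


lemma upd_meas: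
  assumes "v \<in> I"
  shows "(\<lambda>p::real \<times> (nat \<Rightarrow> real). (snd p)(v := fst p)) \<in> measurable (U01 \<Otimes>\<^sub>M PU (I - {v})) (PU I)"
proof -
  have eq: "(\<lambda>p::real \<times> (nat \<Rightarrow> real). (snd p)(v := fst p)) = (\<lambda>p i. if i = v then fst p else snd p i)"
    by (auto simp: fun_eq_iff)
  show ?thesis unfolding eq
  proof (rule measurable_PiM_single')
    fix i assume "i \<in> I"
    show "(\<lambda>p::real \<times> (nat \<Rightarrow> real). if i = v then fst p else snd p i) \<in> measurable (U01 \<Otimes>\<^sub>M PU (I - {v})) U01"
    proof (cases "i = v")
      case True then show ?thesis by simp
    next
      case False
      then have "i \<in> I - {v}" using \<open>i \<in> I\<close> by simp
      then have "(\<lambda>x. x i) \<in> measurable (PU (I - {v})) U01" by (rule measurable_component_singleton)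
      then have "(\<lambda>p. snd p i) \<in> measurable (U01 \<Otimes>\<^sub>M PU (I - {v})) U01"
        by (rule measurable_compose[OF measurable_snd])
      then show ?thesis using False by simp
    qed
  next
    show "(\<lambda>p i. if i = v then fst p else snd p i) \<in> space (U01 \<Otimes>\<^sub>M PU (I - {v})) \<rightarrow> (\<Pi>\<^sub>E i\<in>I. space U01)"
      using assms by (auto simp: space_pair_measure space_PiM PiE_def Pi_def extensional_def)
  qed
qed

lemma split_inner_meas:
  fixes h :: "(nat \<Rightarrow> real) \<Rightarrow> real"
  assumes "v \<in> I" "h \<in> borel_measurable (PU I)"
  shows "(\<lambda>z. \<integral>y. h (y(v := z)) \<partial>PU (I - {v})) \<in> borel_measurable U01"
proof -
  interpret sigma_finite_measure "PU (I - {v})"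
    using prob_space_PiU prob_space_imp_sigma_finite by blast
  have "(\<lambda>p. h ((snd p)(v := fst p))) \<in> borel_measurable (U01 \<Otimes>\<^sub>M PU (I - {v}))"
    using measurable_compose[OF upd_meas[OF assms(1)] assms(2)] .
  then have "case_prod (\<lambda>z y. h (y(v := z))) \<in> borel_measurable (U01 \<Otimes>\<^sub>M PU (I - {v}))"
    by (simp add: case_prod_beta')
  then show ?thesis by (rule borel_measurable_lebesgue_integral)
qed

lemma split_coord:
  fixes h :: "(nat \<Rightarrow> real) \<Rightarrow> real"
  assumes fin: "finite I" and v: "v \<in> I" and hm: "h \<in> borel_measurable (PU I)"
    and hb: "\<And>x. x \<in> space (PU I) \<Longrightarrow> \<bar>h x\<bar> \<le> B"
  shows "integral\<^sup>L (PU I) h = (\<integral>z. (\<integral>y. h (y(v := z)) \<partial>PU (I - {v})) \<partial>U01)"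
proof -
  have ih: "integrable (PU I) h" by (rule bounded_integrable[OF hm hb])
  have "integral\<^sup>L (PU I) h = (\<integral>x. (\<integral>y. h (merge {v} (I - {v}) (x, y)) \<partial>PU (I - {v})) \<partial>PU {v})"
    using fold_PU[OF fin _ ih] v by simp
  also have "\<dots> = (\<integral>x. (\<integral>y. h (y(v := x v)) \<partial>PU (I - {v})) \<partial>PU {v})"
  proof (rule Bochner_Integration.integral_cong)
    fix x :: "nat \<Rightarrow> real"
    show "(\<integral>y. h (merge {v} (I - {v}) (x, y)) \<partial>PU (I - {v})) = (\<integral>y. h (y(v := x v)) \<partial>PU (I - {v}))"
    proof (rule Bochner_Integration.integral_cong)
    fix y :: "nat \<Rightarrow> real" assume "y \<in> space (PU (I - {v}))"
    then have "merge {v} (I - {v}) (x, y) = y(v := x v)"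
      using v by (auto simp: merge_def fun_eq_iff space_PiM PiE_def extensional_def)
    then show "h (merge {v} (I - {v}) (x, y)) = h (y(v := x v))" by simp
  qed simp
  qed simp
  also have "\<dots> = (\<integral>z. (\<integral>y. h (y(v := z)) \<partial>PU (I - {v})) \<partial>U01)"
    by (rule U.product_integral_singleton[OF split_inner_meas[OF v hm]])
  finally show ?thesis .
qed


lemma reindex_integral:
  fixes h :: "(nat \<Rightarrow> real) \<Rightarrow> real"
  assumes inj: "inj_on rr V" and into: "rr \<in> V \<rightarrow> I" and hm: "h \<in> borel_measurable (PU V)"
  shows "(\<integral>x. h (\<lambda>j\<in>V. x (rr j)) \<partial>PU I) = integral\<^sup>L (PU V) h"
proof -
  have d: "distr (PU I) (PU V) (\<lambda>\<omega>. \<lambda>n\<in>V. \<omega> (rr n)) = PU V"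
    using distr_PiM_reindex[of I "\<lambda>_. U01" rr V] inj into prob_space_U01 by simp
  have g: "(\<lambda>\<omega>. \<lambda>n\<in>V. \<omega> (rr n)) \<in> measurable (PU I) (PU V)"
    using into by (intro measurable_restrict) (auto intro: measurable_component_singleton)
  have "integral\<^sup>L (PU V) h = integral\<^sup>L (distr (PU I) (PU V) (\<lambda>\<omega>. \<lambda>n\<in>V. \<omega> (rr n))) h"
    using d by simp
  also have "\<dots> = (\<integral>x. h (\<lambda>j\<in>V. x (rr j)) \<partial>PU I)"
    by (rule integral_distr[OF g hm])
  finally show ?thesis by simp
qed


lemma int01:
  fixes f :: "'b \<Rightarrow> real"
  assumes "prob_space N" "\<And>x. x \<in> space N \<Longrightarrow> 0 \<le> f x \<and> f x \<le> 1"
  shows "0 \<le> integral\<^sup>L N f \<and> integral\<^sup>L N f \<le> 1"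
proof -
  interpret prob_space N by fact
  have "0 \<le> integral\<^sup>L N f" using assms(2) by (intro integral_nonneg_AE) auto
  moreover have "integral\<^sup>L N f \<le> 1"
  proof (cases "integrable N f")
    case True
    have "integral\<^sup>L N f \<le> (\<integral>x. 1 \<partial>N)"
      using True assms(2) by (intro integral_mono) auto
    then show ?thesis by (simp add: prob_space)
  next
    case False then show ?thesis by (simp add: not_integrable_integral_eq)
  qed
  ultimately show ?thesis by simp
qed

lemma upd_space:
  assumes "y \<in> space (PU (I - {v}))" "z \<in> {0..1}" "v \<in> I"
  shows "y(v := z) \<in> space (PU I)"
  using measurable_space[OF upd_meas[OF assms(3)], of "(z, y)"] assms
  by (simp add: space_pair_measure)

lemma upd_meas1:
  assumes "v \<in> I" "z \<in> {0..1}"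
  shows "(\<lambda>y. y(v := z)) \<in> measurable (PU (I - {v})) (PU I)"
proof -
  have "(\<lambda>y::nat\<Rightarrow>real. (z, y)) \<in> measurable (PU (I - {v})) (U01 \<Otimes>\<^sub>M PU (I - {v}))"
    using assms(2) by (intro measurable_Pair) auto
  from measurable_compose[OF this upd_meas[OF assms(1)]] show ?thesis by simp
qed

lemma prodW_local:
  assumes "\<And>i j. (i,j) \<in> P \<Longrightarrow> x i = x' i \<and> x j = x' j"
  shows "prodW w P x = prodW w P x'"
  unfolding prodW_def using assms by (intro prod.cong) auto

definition emap :: "(nat \<Rightarrow> nat) \<Rightarrow> nat \<times> nat \<Rightarrow> nat \<times> nat" where
  "emap f = (\<lambda>(a,b). (min (f a) (f b), max (f a) (f b)))"

locale FW =
  fixes w :: "real \<Rightarrow> real \<Rightarrow> real" and m :: nat and E :: "(nat \<times> nat) set"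
  assumes gw: "graphon w" and sg: "simple_graph m E"
begin

lemma E_sub: "(a,b) \<in> E \<Longrightarrow> a \<in> {1..m} \<and> b \<in> {1..m} \<and> a < b"
  using sg by (auto simp: simple_graph_def)

lemma E_in: "\<forall>(i,j)\<in>E. i \<in> {1..m} \<and> j \<in> {1..m}"
  using E_sub by blast

lemma finE: "finite E"
  using sg unfolding simple_graph_def
  by (rule finite_subset) (rule finite_subset[of _ "{1..m} \<times> {1..m}"], auto)

abbreviation tr :: "nat \<Rightarrow> real \<Rightarrow> real" where
  "tr a z \<equiv> hom_density_root a z m E w"

lemma hom_density_eq: "hom_density m E w = integral\<^sup>L (PU {1..m}) (prodW w E)"
  unfolding hom_density_def prodW_def by simp

lemma tr_eq: "tr a z = (\<integral>u. prodW w E (u(a := z)) \<partial>PU ({1..m} - {a}))"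
  unfolding hom_density_root_def prodW_def by simp

lemma prodW_E_meas: "prodW w E \<in> borel_measurable (PU {1..m})"
  by (rule prodW_meas[OF gw E_in])

lemma prodW_E_bounds: "x \<in> space (PU {1..m}) \<Longrightarrow> 0 \<le> prodW w E x \<and> prodW w E x \<le> 1"
  using prodW_bounds[OF gw E_in, of x] by auto

lemma prodW_E_abs: "x \<in> space (PU {1..m}) \<Longrightarrow> \<bar>prodW w E x\<bar> \<le> 1"
  using prodW_E_bounds by fastforce

lemma tr_meas: "a \<in> {1..m} \<Longrightarrow> (\<lambda>z. tr a z) \<in> borel_measurable U01"
  unfolding tr_eq by (rule split_inner_meas[OF _ prodW_E_meas])

lemma tr_bounds: "a \<in> {1..m} \<Longrightarrow> z \<in> {0..1} \<Longrightarrow> 0 \<le> tr a z \<and> tr a z \<le> 1"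
  unfolding tr_eq
  by (rule int01[OF prob_space_PiU]) (auto intro!: prodW_E_bounds upd_space)

lemma tr_integral: "a \<in> {1..m} \<Longrightarrow> (\<integral>z. tr a z \<partial>U01) = hom_density m E w"
  unfolding tr_eq hom_density_eq
  by (rule split_coord[symmetric, OF _ _ prodW_E_meas, where B=1]) (use prodW_E_abs in auto)

end


context FW begin

lemma emap_inj:
  assumes "inj_on f {1..m}"
  shows "inj_on (emap f) E"
proof (rule inj_onI)
  fix p q assume p: "p \<in> E" and q: "q \<in> E" and eq: "emap f p = emap f q"
  obtain a b where ab: "p = (a,b)" by (cases p)
  obtain c d where cd: "q = (c,d)" by (cases q)
  have abm: "a \<in> {1..m}" "b \<in> {1..m}" "a < b" using E_sub p ab by auto
  have cdm: "c \<in> {1..m}" "d \<in> {1..m}" "c < d" using E_sub q cd by auto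
  have "{f a, f b} = {f c, f d}"
    using eq unfolding ab cd emap_def by (auto simp: min_def max_def split: if_splits)
  then have "f ` {a, b} = f ` {c, d}" by simp
  moreover have "inj_on f ({a,b} \<union> {c,d})" by (rule inj_on_subset[OF assms]) (use abm cdm in auto)
  ultimately have "{a,b} = {c,d}" by (metis inj_on_Un_image_eq_iff)
  then show "p = q" unfolding ab cd using abm cdm by (auto simp: doubleton_eq_iff)
qed

lemma prodW_img:
  assumes "inj_on f {1..m}" "\<And>a. a \<in> {1..m} \<Longrightarrow> x (f a) \<in> {0..1}"
  shows "prodW w (emap f ` E) x = prodW w E (\<lambda>j. x (f j))"
proof -
  have "prodW w (emap f ` E) x = (\<Prod>e\<in>E. (\<lambda>(i,j). w (x i) (x j)) (emap f e))"
    unfolding prodW_def by (rule prod.reindex[OF emap_inj[OF assms(1)], unfolded comp_def])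
  also have "\<dots> = prodW w E (\<lambda>j. x (f j))"
    unfolding prodW_def
  proof (rule prod.cong[OF refl])
    fix e assume e: "e \<in> E"
    obtain a b where ab: "e = (a,b)" by (cases e)
    have "x (f a) \<in> {0..1}" "x (f b) \<in> {0..1}" using assms(2) E_sub e ab by auto
    then have "w (x (f a)) (x (f b)) = w (x (f b)) (x (f a))" using gw by (auto simp: graphon_def)
    then show "(\<lambda>(i,j). w (x i) (x j)) (emap f e) = (\<lambda>(i, j). w (x (f i)) (x (f j))) e"
      unfolding ab emap_def by (auto simp: min_def max_def)
  qed
  finally show ?thesis .
qed

lemma inj_maps_D:
  assumes "f \<in> inj_maps m n"
  shows "inj_on f {1..m}" "\<And>a. a \<in> {1..m} \<Longrightarrow> f a \<in> {1..n}"
  using assms by (auto simp: inj_maps_def PiE_def Pi_def)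

lemma emap_in:
  assumes "f \<in> inj_maps m n"
  shows "\<forall>(i,j)\<in>emap f ` E. i \<in> {1..n} \<and> j \<in> {1..n}"
  using assms E_sub inj_maps_D(2)[OF assms] by (fastforce simp: emap_def min_def max_def)

lemma hom_prob:
  assumes f: "f \<in> inj_maps m n"
  shows "(\<integral>x. prodW w (emap f ` E) x \<partial>PU {1..n}) = hom_density m E w"
proof -
  have "(\<integral>x. prodW w (emap f ` E) x \<partial>PU {1..n}) = (\<integral>x. prodW w E (\<lambda>j\<in>{1..m}. x (f j)) \<partial>PU {1..n})"
  proof (rule Bochner_Integration.integral_cong[OF refl])
    fix x assume x: "x \<in> space (PU {1..n})"
    have "prodW w (emap f ` E) x = prodW w E (\<lambda>j. x (f j))"
    proof (rule prodW_img)
      show "inj_on f {1..m}" using inj_maps_D[OF f] by simp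
      show "\<And>a. a \<in> {1..m} \<Longrightarrow> x (f a) \<in> {0..1}"
        using space_PU_01[OF x] inj_maps_D(2)[OF f] by blast
    qed
    also have "\<dots> = prodW w E (\<lambda>j\<in>{1..m}. x (f j))"
      by (rule prodW_local) (use E_sub in auto)
    finally show "prodW w (emap f ` E) x = prodW w E (\<lambda>j\<in>{1..m}. x (f j))" .
  qed
  also have "\<dots> = integral\<^sup>L (PU {1..m}) (prodW w E)"
    using inj_maps_D[OF f] by (intro reindex_integral prodW_E_meas) auto
  finally show ?thesis using hom_density_eq by simp
qed

end


context FW begin

lemma inner_tr:
  assumes f: "f \<in> inj_maps m n" and a: "a \<in> {1..m}" and z: "z \<in> {0..1}"
  shows "(\<integral>y. prodW w (emap f ` E) (y(f a := z)) \<partial>PU ({1..n} - {f a})) = tr a z"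
proof -
  note fi = inj_maps_D[OF f]
  have fa: "f a \<in> {1..n}" using fi(2) a by blast
  have fne: "\<And>j. j \<in> {1..m} \<Longrightarrow> j \<noteq> a \<Longrightarrow> f j \<noteq> f a"
    using fi(1) a by (metis inj_on_contraD)
  have "(\<integral>y. prodW w (emap f ` E) (y(f a := z)) \<partial>PU ({1..n} - {f a}))
      = (\<integral>y. prodW w E ((\<lambda>j\<in>{1..m} - {a}. y (f j))(a := z)) \<partial>PU ({1..n} - {f a}))"
  proof (rule Bochner_Integration.integral_cong[OF refl])
    fix y assume y: "y \<in> space (PU ({1..n} - {f a}))"
    have ys: "y(f a := z) \<in> space (PU {1..n})" by (rule upd_space[OF y z fa])
    have "prodW w (emap f ` E) (y(f a := z)) = prodW w E (\<lambda>j. (y(f a := z)) (f j))"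
    proof (rule prodW_img)
      show "inj_on f {1..m}" using fi by simp
      show "\<And>j. j \<in> {1..m} \<Longrightarrow> (y(f a := z)) (f j) \<in> {0..1}"
        using space_PU_01[OF ys] fi(2) by blast
    qed
    also have "\<dots> = prodW w E ((\<lambda>j\<in>{1..m} - {a}. y (f j))(a := z))"
      by (rule prodW_local) (use E_sub fne in auto)
    finally show "prodW w (emap f ` E) (y(f a := z)) = prodW w E ((\<lambda>j\<in>{1..m} - {a}. y (f j))(a := z))" .
  qed
  also have "\<dots> = (\<integral>u. prodW w E (u(a := z)) \<partial>PU ({1..m} - {a}))"
  proof (rule reindex_integral)
    show "inj_on f ({1..m} - {a})" using fi(1) by (rule inj_on_subset) auto
    show "f \<in> {1..m} - {a} \<rightarrow> {1..n} - {f a}" using fi(2) fne by auto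
    show "(\<lambda>u. prodW w E (u(a := z))) \<in> borel_measurable (PU ({1..m} - {a}))"
      using measurable_compose[OF upd_meas1[OF a z] prodW_E_meas] .
  qed
  finally show ?thesis using tr_eq by simp
qed

lemma emap_meas:
  assumes "f \<in> inj_maps m n"
  shows "prodW w (emap f ` E) \<in> borel_measurable (PU {1..n})"
  by (rule prodW_meas[OF gw emap_in[OF assms]])

lemma emap_bounds:
  assumes "f \<in> inj_maps m n" "x \<in> space (PU {1..n})"
  shows "0 \<le> prodW w (emap f ` E) x \<and> prodW w (emap f ` E) x \<le> 1"
  using prodW_bounds[OF gw emap_in[OF assms(1)] assms(2)] by simp

lemma emap_abs:
  assumes "f \<in> inj_maps m n" "x \<in> space (PU {1..n})"
  shows "\<bar>prodW w (emap f ` E) x\<bar> \<le> 1"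
  using emap_bounds[OF assms] by simp

lemma glue_prob:
  assumes f: "f \<in> inj_maps m n" and g: "g \<in> inj_maps m n" and a: "a \<in> {1..m}" and b: "b \<in> {1..m}"
    and fg: "f a = g b" and disj: "f ` ({1..m} - {a}) \<inter> g ` ({1..m} - {b}) = {}"
  shows "(\<integral>x. prodW w (emap f ` E) x * prodW w (emap g ` E) x \<partial>PU {1..n}) = (\<integral>z. tr a z * tr b z \<partial>U01)"
proof -
  define v where "v = f a"
  note fi = inj_maps_D[OF f] and gi = inj_maps_D[OF g]
  have v: "v \<in> {1..n}" using fi(2) a v_def by blast
  have fne: "\<And>j. j \<in> {1..m} \<Longrightarrow> j \<noteq> a \<Longrightarrow> f j \<noteq> v"
    using fi(1) a v_def by (metis inj_on_contraD)
  have gne: "\<And>j. j \<in> {1..m} \<Longrightarrow> j \<noteq> b \<Longrightarrow> g j \<noteq> v"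
    using gi(1) b v_def fg by (metis inj_on_contraD)
  define h where "h x = prodW w (emap f ` E) x * prodW w (emap g ` E) x" for x
  have hm: "h \<in> borel_measurable (PU {1..n})"
    unfolding h_def using emap_meas[OF f] emap_meas[OF g] by simp
  have hb: "\<And>x. x \<in> space (PU {1..n}) \<Longrightarrow> \<bar>h x\<bar> \<le> 1"
  proof -
    fix x assume x: "x \<in> space (PU {1..n})"
    show "\<bar>h x\<bar> \<le> 1" unfolding h_def using emap_bounds[OF f x] emap_bounds[OF g x]
      by (simp add: abs_mult mult_le_one)
  qed
  have "(\<integral>x. h x \<partial>PU {1..n}) = (\<integral>z. (\<integral>y. h (y(v := z)) \<partial>PU ({1..n} - {v})) \<partial>U01)"
    by (rule split_coord[OF _ v hm hb]) simp
  also have "\<dots> = (\<integral>z. tr a z * tr b z \<partial>U01)"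
  proof (rule Bochner_Integration.integral_cong[OF refl])
    fix z assume "z \<in> space U01"
    then have z: "z \<in> {0..1}" by simp
    define F where "F y = prodW w (emap f ` E) (y(v := z))" for y
    define G where "G y = prodW w (emap g ` E) (y(v := z))" for y
    have Fm: "F \<in> borel_measurable (PU ({1..n} - {v}))"
      unfolding F_def using measurable_compose[OF upd_meas1[OF v z] emap_meas[OF f]] .
    have Gm: "G \<in> borel_measurable (PU ({1..n} - {v}))"
      unfolding G_def using measurable_compose[OF upd_meas1[OF v z] emap_meas[OF g]] .
    have Fb: "\<And>y. y \<in> space (PU ({1..n} - {v})) \<Longrightarrow> \<bar>F y\<bar> \<le> 1"
      unfolding F_def using emap_abs[OF f] upd_space[OF _ z v] by blast
    have Gb: "\<And>y. y \<in> space (PU ({1..n} - {v})) \<Longrightarrow> \<bar>G y\<bar> \<le> 1"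
      unfolding G_def using emap_abs[OF g] upd_space[OF _ z v] by blast
    have FV: "\<And>y. F y = F (restrict y (f ` ({1..m} - {a})))"
      unfolding F_def
    proof (rule prodW_local)
      fix y i j assume "(i, j) \<in> emap f ` E"
      then obtain p q where pq: "(p,q) \<in> E" "i = min (f p) (f q)" "j = max (f p) (f q)"
        by (auto simp: emap_def)
      have "p \<in> {1..m}" "q \<in> {1..m}" using E_sub pq(1) by auto
      then have "i \<in> f ` {1..m}" "j \<in> f ` {1..m}" using pq by (auto simp: min_def max_def)
      moreover have "\<And>l. l \<in> f ` {1..m} \<Longrightarrow> (y(v := z)) l = ((restrict y (f ` ({1..m} - {a})))(v := z)) l"
        using v_def by auto
      ultimately show "(y(v := z)) i = ((restrict y (f ` ({1..m} - {a})))(v := z)) i \<and>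
                       (y(v := z)) j = ((restrict y (f ` ({1..m} - {a})))(v := z)) j" by blast
    qed
    have GV: "\<And>y. G y = G (restrict y (g ` ({1..m} - {b})))"
      unfolding G_def
    proof (rule prodW_local)
      fix y i j assume "(i, j) \<in> emap g ` E"
      then obtain p q where pq: "(p,q) \<in> E" "i = min (g p) (g q)" "j = max (g p) (g q)"
        by (auto simp: emap_def)
      have "p \<in> {1..m}" "q \<in> {1..m}" using E_sub pq(1) by auto
      then have "i \<in> g ` {1..m}" "j \<in> g ` {1..m}" using pq by (auto simp: min_def max_def)
      moreover have "\<And>l. l \<in> g ` {1..m} \<Longrightarrow> (y(v := z)) l = ((restrict y (g ` ({1..m} - {b})))(v := z)) l"
        using v_def fg by auto
      ultimately show "(y(v := z)) i = ((restrict y (g ` ({1..m} - {b})))(v := z)) i \<and>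
                       (y(v := z)) j = ((restrict y (g ` ({1..m} - {b})))(v := z)) j" by blast
    qed
    have "(\<integral>y. h (y(v := z)) \<partial>PU ({1..n} - {v})) = (\<integral>y. F y * G y \<partial>PU ({1..n} - {v}))"
      unfolding h_def F_def G_def by simp
    also have "\<dots> = (\<integral>y. F y \<partial>PU ({1..n} - {v})) * (\<integral>y. G y \<partial>PU ({1..n} - {v}))"
    proof (rule indep_blocks[OF _ _ _ disj Fm Gm Fb Gb FV GV])
      show "f ` ({1..m} - {a}) \<subseteq> {1..n} - {v}" using fi(2) fne by blast
      show "g ` ({1..m} - {b}) \<subseteq> {1..n} - {v}" using gi(2) gne by blast
    qed simp
    also have "\<dots> = tr a z * tr b z"
      using inner_tr[OF f a z] inner_tr[OF g b z] unfolding F_def G_def v_def fg by simp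
    finally show "(\<integral>y. h (y(v := z)) \<partial>PU ({1..n} - {v})) = tr a z * tr b z" .
  qed
  finally show ?thesis unfolding h_def .
qed

end


definition pairs :: "nat \<Rightarrow> (nat \<times> nat) set" where
  "pairs n = {(i,j). 1 \<le> i \<and> i < j \<and> j \<le> n}"

lemma finite_pairs: "finite (pairs n)"
  by (rule finite_subset[of _ "{1..n} \<times> {1..n}"]) (auto simp: pairs_def)

definition verts :: "(nat \<times> nat) set \<Rightarrow> nat set" where
  "verts P = fst ` P \<union> snd ` P"

locale MM =
  fixes M :: "'a measure" and d :: nat and W :: "nat set \<Rightarrow> real \<Rightarrow> real \<Rightarrow> real"
    and \<xi> :: "nat \<Rightarrow> nat \<Rightarrow> 'a \<Rightarrow> real" and A :: "nat \<Rightarrow> nat \<Rightarrow> nat \<Rightarrow> nat \<Rightarrow> 'a \<Rightarrow> bool"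
    and k :: "nat set"
  assumes mm: "multiplex_model M d W \<xi> A" and kL: "k \<in> Lambda d" and mg: "multigraphon d W"
begin

sublocale prob_space M using mm by (simp add: multiplex_model_def)

lemma gwk: "graphon (W k)" using mg kL by (simp add: multigraphon_def)

lemma k_ne: "k \<noteq> {}" and k_sub: "k \<subseteq> {1..d}" and k_fin: "finite k"
  using kL by (auto simp: Lambda_def intro: finite_subset)

lemma A_meas[measurable]: "A n l i j \<in> measurable M (count_space UNIV)"
  using mm by (simp add: multiplex_model_def)

definition Ev :: "nat \<Rightarrow> (nat \<times> nat) set \<Rightarrow> 'a set" where
  "Ev n P = {\<omega> \<in> space M. \<forall>p\<in>P. \<forall>l\<in>k. A n l (fst p) (snd p) \<omega>}"

lemma Ev_sets: "finite P \<Longrightarrow> Ev n P \<in> sets M"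
  unfolding Ev_def using k_fin by measurable

lemma Ev_Un: "Ev n (P \<union> Q) = Ev n P \<inter> Ev n Q"
  unfolding Ev_def by auto

definition Iw :: "nat \<Rightarrow> (nat \<times> nat) set \<Rightarrow> real" where
  "Iw n P = (\<integral>x. prodW (W k) P x \<partial>PU {1..n})"

lemma pairs_in: "P \<subseteq> pairs n \<Longrightarrow> \<forall>(i,j)\<in>P. i \<in> {1..n} \<and> j \<in> {1..n}"
  by (auto simp: pairs_def)

lemma Ev_measure:
  assumes P: "P \<subseteq> pairs n"
  shows "measure M (Ev n P) = Iw n P"
proof -
  define S where "S i j = (if (i,j) \<in> P then k else {})" for i j
  have S: "\<forall>i j. S i j \<subseteq> {1..d}" using k_sub by (simp add: S_def)
  have B: "\<forall>i. (UNIV::real set) \<in> sets borel" by simp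
  have all: "\<forall>n B S. (\<forall>i. B i \<in> sets borel) \<longrightarrow> (\<forall>i j. S i j \<subseteq> {1..d}) \<longrightarrow>
        measure M {\<omega> \<in> space M. (\<forall>i\<in>{1..n}. \<xi> n i \<omega> \<in> B i) \<and>
                     (\<forall>i j. 1 \<le> i \<and> i < j \<and> j \<le> n \<longrightarrow> (\<forall>l\<in>S i j. A n l i j \<omega>))}
        = (\<integral>x. (\<Prod>i\<in>{1..n}. indicator (B i) (x i)) *
               (\<Prod>(i,j)\<in>{(i,j). 1 \<le> i \<and> i < j \<and> j \<le> n}. Wt W (S i j) (x i) (x j))
             \<partial>(PiM {1..n} (\<lambda>_. U01)))"
    using mm unfolding multiplex_model_def by blast
  have
    eq: "measure M {\<omega> \<in> space M. (\<forall>i\<in>{1..n}. \<xi> n i \<omega> \<in> UNIV) \<and>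
                     (\<forall>i j. 1 \<le> i \<and> i < j \<and> j \<le> n \<longrightarrow> (\<forall>l\<in>S i j. A n l i j \<omega>))}
        = (\<integral>x. (\<Prod>i\<in>{1..n}. indicator (UNIV::real set) (x i)) *
               (\<Prod>(i,j)\<in>{(i,j). 1 \<le> i \<and> i < j \<and> j \<le> n}. Wt W (S i j) (x i) (x j))
             \<partial>(PiM {1..n} (\<lambda>_. U01)))"
    by (rule all[rule_format, of "\<lambda>_. UNIV" S n]) (use S in auto)
  have set_eq: "{\<omega> \<in> space M. (\<forall>i\<in>{1..n}. \<xi> n i \<omega> \<in> UNIV) \<and>
                     (\<forall>i j. 1 \<le> i \<and> i < j \<and> j \<le> n \<longrightarrow> (\<forall>l\<in>S i j. A n l i j \<omega>))} = Ev n P"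
    using P unfolding Ev_def S_def pairs_def by auto
  have int_eq: "\<And>x. (\<Prod>i\<in>{1..n}. indicator (UNIV::real set) (x i)) *
               (\<Prod>(i,j)\<in>{(i,j). 1 \<le> i \<and> i < j \<and> j \<le> n}. Wt W (S i j) (x i) (x j)) = prodW (W k) P x"
  proof -
    fix x :: "nat \<Rightarrow> real"
    have "(\<Prod>(i,j)\<in>{(i,j). 1 \<le> i \<and> i < j \<and> j \<le> n}. Wt W (S i j) (x i) (x j))
        = (\<Prod>p\<in>pairs n. if p \<in> P then (\<lambda>(i,j). W k (x i) (x j)) p else 1)"
      unfolding pairs_def S_def Wt_def using k_ne by (intro prod.cong) auto
    also have "\<dots> = (\<Prod>p\<in>pairs n \<inter> P. (\<lambda>(i,j). W k (x i) (x j)) p)"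
      by (rule prod.inter_restrict[symmetric]) (rule finite_pairs)
    also have "pairs n \<inter> P = P" using P by auto
    finally show "(\<Prod>i\<in>{1..n}. indicator (UNIV::real set) (x i)) *
               (\<Prod>(i,j)\<in>{(i,j). 1 \<le> i \<and> i < j \<and> j \<le> n}. Wt W (S i j) (x i) (x j)) = prodW (W k) P x"
      unfolding prodW_def by simp
  qed
  show ?thesis using eq unfolding set_eq int_eq Iw_def .
qed

end


context MM begin

lemma Iw_bounds: "P \<subseteq> pairs n \<Longrightarrow> 0 \<le> Iw n P \<and> Iw n P \<le> 1"
proof -
  assume P: "P \<subseteq> pairs n"
  show ?thesis unfolding Iw_def
    by (rule int01[OF prob_space_PiU]) (use prodW_bounds[OF gwk pairs_in[OF P]] in simp)
qed

lemma prodW_Un: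
  assumes "finite P" "finite Q" "P \<inter> Q = {}"
  shows "prodW w (P \<union> Q) x = prodW w P x * prodW w Q x"
  unfolding prodW_def using assms by (rule prod.union_disjoint)

lemma verts_disj_edges: "verts P \<inter> verts Q = {} \<Longrightarrow> P \<inter> Q = {}"
proof -
  assume h: "verts P \<inter> verts Q = {}"
  show "P \<inter> Q = {}"
  proof (rule ccontr)
    assume "P \<inter> Q \<noteq> {}"
    then obtain p where "p \<in> P" "p \<in> Q" by blast
    then have "fst p \<in> verts P \<inter> verts Q" unfolding verts_def by blast
    then show False using h by blast
  qed
qed

lemma finite_sub_pairs: "P \<subseteq> pairs n \<Longrightarrow> finite P"
  using finite_pairs finite_subset by blast

lemma prodW_restrict_verts: "prodW w P x = prodW w P (restrict x (verts P))"
proof (rule prodW_local)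
  fix i j assume "(i, j) \<in> P"
  then have "i \<in> verts P" "j \<in> verts P" unfolding verts_def by force+
  then show "x i = restrict x (verts P) i \<and> x j = restrict x (verts P) j" by simp
qed

lemma Iw_Un:
  assumes P: "P \<subseteq> pairs n" and Q: "Q \<subseteq> pairs n" and dj: "verts P \<inter> verts Q = {}"
  shows "Iw n (P \<union> Q) = Iw n P * Iw n Q"
proof -
  have "Iw n (P \<union> Q) = (\<integral>x. prodW (W k) P x * prodW (W k) Q x \<partial>PU {1..n})"
  proof -
    have "prodW (W k) (P \<union> Q) = (\<lambda>x. prodW (W k) P x * prodW (W k) Q x)"
      using prodW_Un[OF finite_sub_pairs[OF P] finite_sub_pairs[OF Q] verts_disj_edges[OF dj]] by (simp add: fun_eq_iff)
    then show ?thesis unfolding Iw_def by simp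
  qed
  also have "\<dots> = Iw n P * Iw n Q"
    unfolding Iw_def
  proof (rule indep_blocks[OF _ _ _ dj, where B=1])
    show "verts P \<subseteq> {1..n}" "verts Q \<subseteq> {1..n}" using P Q by (auto simp: verts_def pairs_def)
    show "prodW (W k) P \<in> borel_measurable (PU {1..n})" by (rule prodW_meas[OF gwk pairs_in[OF P]])
    show "prodW (W k) Q \<in> borel_measurable (PU {1..n})" by (rule prodW_meas[OF gwk pairs_in[OF Q]])
    show "\<And>x. x \<in> space (PU {1..n}) \<Longrightarrow> \<bar>prodW (W k) P x\<bar> \<le> 1"
      using prodW_bounds[OF gwk pairs_in[OF P]] by fastforce
    show "\<And>x. x \<in> space (PU {1..n}) \<Longrightarrow> \<bar>prodW (W k) Q x\<bar> \<le> 1"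
      using prodW_bounds[OF gwk pairs_in[OF Q]] by fastforce
    show "\<And>x. prodW (W k) P x = prodW (W k) P (restrict x (verts P))" by (rule prodW_restrict_verts)
    show "\<And>x. prodW (W k) Q x = prodW (W k) Q (restrict x (verts Q))" by (rule prodW_restrict_verts)
  qed simp
  finally show ?thesis .
qed

lemma ind_Ev_integrable: "finite P \<Longrightarrow> integrable M (indicator (Ev n P) :: 'a \<Rightarrow> real)"
  by (rule integrable_real_indicator[OF Ev_sets]) (simp_all add: less_top[symmetric])

lemma ind_Ev_integral: "P \<subseteq> pairs n \<Longrightarrow> (\<integral>\<omega>. indicator (Ev n P) \<omega> \<partial>M) = Iw n P"
proof -
  assume P: "P \<subseteq> pairs n"
  have "Ev n P \<subseteq> space M" by (auto simp: Ev_def)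
  then have "(\<integral>\<omega>. indicator (Ev n P) \<omega> \<partial>M) = measure M (Ev n P)"
    by (simp add: Int_absorb2)
  also have "\<dots> = Iw n P" by (rule Ev_measure[OF P])
  finally show ?thesis .
qed

lemma ind_Ev_mult: "(indicator (Ev n P) \<omega> :: real) * indicator (Ev n Q) \<omega> = indicator (Ev n (P \<union> Q)) \<omega>"
  by (simp add: Ev_Un indicator_inter_arith)

lemma cov_term:
  assumes P: "P \<subseteq> pairs n" and Q: "Q \<subseteq> pairs n"
  shows "(\<integral>\<omega>. (indicator (Ev n P) \<omega> - Iw n P) * (indicator (Ev n Q) \<omega> - Iw n Q) \<partial>M)
       = Iw n (P \<union> Q) - Iw n P * Iw n Q"
proof -
  have fP: "finite P" "finite Q" "finite (P \<union> Q)" using finite_sub_pairs P Q by auto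
  have PQ: "P \<union> Q \<subseteq> pairs n" using P Q by auto
  have eq: "\<And>\<omega>. (indicator (Ev n P) \<omega> - Iw n P) * (indicator (Ev n Q) \<omega> - Iw n Q)
     = indicator (Ev n (P \<union> Q)) \<omega> - Iw n Q * indicator (Ev n P) \<omega> - Iw n P * indicator (Ev n Q) \<omega> + Iw n P * Iw n Q"
    using ind_Ev_mult[of n P _ Q] by (simp add: algebra_simps)
  have iP: "integrable M (indicator (Ev n P) :: 'a \<Rightarrow> real)" by (rule ind_Ev_integrable[OF fP(1)])
  have iQ: "integrable M (indicator (Ev n Q) :: 'a \<Rightarrow> real)" by (rule ind_Ev_integrable[OF fP(2)])
  have iPQ: "integrable M (indicator (Ev n (P \<union> Q)) :: 'a \<Rightarrow> real)" by (rule ind_Ev_integrable[OF fP(3)])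
  have "(\<integral>\<omega>. (indicator (Ev n P) \<omega> - Iw n P) * (indicator (Ev n Q) \<omega> - Iw n Q) \<partial>M)
     = (\<integral>\<omega>. indicator (Ev n (P \<union> Q)) \<omega> - Iw n Q * indicator (Ev n P) \<omega> - Iw n P * indicator (Ev n Q) \<omega> + Iw n P * Iw n Q \<partial>M)"
    unfolding eq ..
  also have "\<dots> = Iw n (P \<union> Q) - Iw n Q * Iw n P - Iw n P * Iw n Q + Iw n P * Iw n Q"
    using iP iQ iPQ ind_Ev_integral[OF P] ind_Ev_integral[OF Q] ind_Ev_integral[OF PQ]
    by (simp add: prob_space)
  finally show ?thesis by simp
qed

end


context MM begin

lemma var_bound:
  fixes J :: "'i set" and Pf :: "'i \<Rightarrow> (nat \<times> nat) set"
  assumes J: "finite J" and Pf: "\<And>a. a \<in> J \<Longrightarrow> Pf a \<subseteq> pairs n"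
  shows "(\<integral>\<omega>. (\<Sum>a\<in>J. indicator (Ev n (Pf a)) \<omega> - Iw n (Pf a))\<^sup>2 \<partial>M)
     \<le> real (card {p \<in> J \<times> J. verts (Pf (fst p)) \<inter> verts (Pf (snd p)) \<noteq> {}})"
proof -
  define Z where "Z a \<omega> = (indicator (Ev n (Pf a)) \<omega> - Iw n (Pf a) :: real)" for a \<omega>
  define g where "g p = Iw n (Pf (fst p) \<union> Pf (snd p)) - Iw n (Pf (fst p)) * Iw n (Pf (snd p))" for p
  define bad where "bad = {p \<in> J \<times> J. verts (Pf (fst p)) \<inter> verts (Pf (snd p)) \<noteq> {}}"
  have iZ: "\<And>a b. a \<in> J \<Longrightarrow> b \<in> J \<Longrightarrow> integrable M (\<lambda>\<omega>. Z a \<omega> * Z b \<omega>)"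
  proof -
    fix a b assume a: "a \<in> J" and b: "b \<in> J"
    have "integrable M (\<lambda>\<omega>. indicator (Ev n (Pf a \<union> Pf b)) \<omega> - Iw n (Pf b) * indicator (Ev n (Pf a)) \<omega> - Iw n (Pf a) * indicator (Ev n (Pf b)) \<omega> + Iw n (Pf a) * Iw n (Pf b) :: real)"
    proof -
      have fa: "finite (Pf a)" "finite (Pf b)" using finite_sub_pairs Pf a b by auto
      show ?thesis
        by (intro Bochner_Integration.integrable_add Bochner_Integration.integrable_diff integrable_mult_right
           ind_Ev_integrable integrable_const) (use fa in auto)
    qed
    moreover have "\<And>\<omega>. Z a \<omega> * Z b \<omega> = indicator (Ev n (Pf a \<union> Pf b)) \<omega> - Iw n (Pf b) * indicator (Ev n (Pf a)) \<omega> - Iw n (Pf a) * indicator (Ev n (Pf b)) \<omega> + Iw n (Pf a) * Iw n (Pf b)"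
      unfolding Z_def using ind_Ev_mult[of n "Pf a" _ "Pf b"] by (simp add: algebra_simps)
    ultimately show "integrable M (\<lambda>\<omega>. Z a \<omega> * Z b \<omega>)" by simp
  qed
  have "(\<integral>\<omega>. (\<Sum>a\<in>J. Z a \<omega>)\<^sup>2 \<partial>M) = (\<integral>\<omega>. (\<Sum>a\<in>J. \<Sum>b\<in>J. Z a \<omega> * Z b \<omega>) \<partial>M)"
    by (simp add: power2_eq_square sum_product)
  also have "\<dots> = (\<Sum>a\<in>J. (\<integral>\<omega>. (\<Sum>b\<in>J. Z a \<omega> * Z b \<omega>) \<partial>M))"
    by (rule Bochner_Integration.integral_sum) (rule Bochner_Integration.integrable_sum, rule iZ, assumption+)
  also have "\<dots> = (\<Sum>a\<in>J. \<Sum>b\<in>J. (\<integral>\<omega>. Z a \<omega> * Z b \<omega> \<partial>M))"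
  proof (rule sum.cong[OF refl])
    fix a assume a: "a \<in> J"
    show "(\<integral>\<omega>. (\<Sum>b\<in>J. Z a \<omega> * Z b \<omega>) \<partial>M) = (\<Sum>b\<in>J. (\<integral>\<omega>. Z a \<omega> * Z b \<omega> \<partial>M))"
      by (rule Bochner_Integration.integral_sum) (rule iZ[OF a])
  qed
  also have "\<dots> = (\<Sum>a\<in>J. \<Sum>b\<in>J. g (a, b))"
  proof (intro sum.cong refl)
    fix a b assume "a \<in> J" "b \<in> J"
    then show "(\<integral>\<omega>. Z a \<omega> * Z b \<omega> \<partial>M) = g (a, b)"
      unfolding Z_def g_def using cov_term[OF Pf Pf] by simp
  qed
  also have "\<dots> = (\<Sum>p\<in>J \<times> J. g p)"
    using sum.cartesian_product[of "\<lambda>a b. g (a,b)" J J] by simp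
  also have "\<dots> = (\<Sum>p\<in>bad. g p)"
  proof (rule sum.mono_neutral_right)
    show "finite (J \<times> J)" using J by simp
    show "bad \<subseteq> J \<times> J" unfolding bad_def by auto
    show "\<forall>p\<in>J \<times> J - bad. g p = 0"
    proof
      fix p assume p: "p \<in> J \<times> J - bad"
      then have "verts (Pf (fst p)) \<inter> verts (Pf (snd p)) = {}" "fst p \<in> J" "snd p \<in> J"
        unfolding bad_def by auto
      then show "g p = 0" unfolding g_def using Iw_Un[OF Pf[of "fst p"] Pf[of "snd p"]] by simp
    qed
  qed
  also have "\<dots> \<le> (\<Sum>p\<in>bad. 1)"
  proof (rule sum_mono)
    fix p assume p: "p \<in> bad"
    then have "fst p \<in> J" "snd p \<in> J" unfolding bad_def by auto
    then have h: "Pf (fst p) \<union> Pf (snd p) \<subseteq> pairs n" "Pf (fst p) \<subseteq> pairs n" "Pf (snd p) \<subseteq> pairs n"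
      using Pf by auto
    have "Iw n (Pf (fst p) \<union> Pf (snd p)) \<le> 1" using Iw_bounds[OF h(1)] by simp
    moreover have "0 \<le> Iw n (Pf (fst p)) * Iw n (Pf (snd p))"
      using Iw_bounds[OF h(2)] Iw_bounds[OF h(3)] by simp
    ultimately show "g p \<le> 1" unfolding g_def by linarith
  qed
  also have "\<dots> = real (card bad)" by simp
  finally have fin: "(\<integral>\<omega>. (\<Sum>a\<in>J. Z a \<omega>)\<^sup>2 \<partial>M) \<le> real (card bad)" .
  have "\<And>\<omega>. (\<Sum>a\<in>J. Z a \<omega>) = (\<Sum>a\<in>J. indicator (Ev n (Pf a)) \<omega> - Iw n (Pf a))"
    unfolding Z_def by (rule refl)
  then show ?thesis using fin unfolding bad_def by simp
qed

end


abbreviation Fm :: "nat \<Rightarrow> nat \<Rightarrow> (nat \<Rightarrow> nat) set" where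
  "Fm m n \<equiv> {1..m} \<rightarrow>\<^sub>E {1..n}"

lemma card_PiE_fix:
  assumes I: "finite I" and D: "D \<subseteq> I" and f: "\<And>i. i \<in> D \<Longrightarrow> f i \<in> S"
  shows "card {\<phi> \<in> I \<rightarrow>\<^sub>E S. \<forall>i\<in>D. \<phi> i = f i} = card S ^ card (I - D)"
proof -
  have "{\<phi> \<in> I \<rightarrow>\<^sub>E S. \<forall>i\<in>D. \<phi> i = f i} = PiE I (\<lambda>i. if i \<in> D then {f i} else S)"
    using D f by (auto simp: PiE_def Pi_def split: if_splits)
  then have "card {\<phi> \<in> I \<rightarrow>\<^sub>E S. \<forall>i\<in>D. \<phi> i = f i} = (\<Prod>i\<in>I. card (if i \<in> D then {f i} else S))"
    using I by (simp add: card_PiE)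
  also have "\<dots> = (\<Prod>i\<in>I. if i \<in> D then 1 else card S)"
    by (intro prod.cong) auto
  also have "\<dots> = (\<Prod>i\<in>I - D. card S)"
    using I D by (simp add: prod.If_cases Int_absorb1 Diff_eq)
  also have "\<dots> = card S ^ card (I - D)" by simp
  finally show ?thesis .
qed

lemma card_Fm: "card (Fm m n) = n ^ m"
  by (simp add: card_PiE)

lemma finite_Fm: "finite (Fm m n)"
  by (simp add: finite_PiE)

lemma fin_Fm_sub: "finite {\<phi> \<in> Fm m n. P \<phi>}"
  by (rule finite_subset[OF _ finite_Fm]) auto

lemma cnt1:
  assumes "a \<in> {1..m}" "x \<in> {1..n}"
  shows "card {\<phi> \<in> Fm m n. \<phi> a = x} = n ^ (m - 1)"
proof -
  have "card {\<phi> \<in> Fm m n. \<forall>i\<in>{a}. \<phi> i = x} = card {1..n} ^ card ({1..m} - {a})"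
    by (rule card_PiE_fix) (use assms in auto)
  then show ?thesis using assms by simp
qed

lemma cnt1_le:
  assumes "a \<in> {1..m}"
  shows "card {\<phi> \<in> Fm m n. \<phi> a = x} \<le> n ^ (m - 1)"
proof (cases "x \<in> {1..n}")
  case True then show ?thesis using cnt1[OF assms True] by simp
next
  case False
  then have "{\<phi> \<in> Fm m n. \<phi> a = x} = {}" using assms by (auto simp: PiE_def Pi_def)
  then show ?thesis by (metis card.empty zero_le)
qed

lemma cnt2:
  assumes "a \<in> {1..m}" "b \<in> {1..m}" "a \<noteq> b"
  shows "card {\<phi> \<in> Fm m n. \<phi> a = x \<and> \<phi> b = y} \<le> n ^ (m - 2)"
proof (cases "x \<in> {1..n} \<and> y \<in> {1..n}")
  case True
  have "card {\<phi> \<in> Fm m n. \<forall>i\<in>{a,b}. \<phi> i = (if i = a then x else y)} = card {1..n} ^ card ({1..m} - {a,b})"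
    by (rule card_PiE_fix) (use assms True in auto)
  moreover have "{\<phi> \<in> Fm m n. \<forall>i\<in>{a,b}. \<phi> i = (if i = a then x else y)} = {\<phi> \<in> Fm m n. \<phi> a = x \<and> \<phi> b = y}"
    using assms by auto
  moreover have "card ({1..m} - {a,b}) = m - 2" using assms by (simp add: card_Diff_subset)
  ultimately show ?thesis by simp
next
  case False
  then have "{\<phi> \<in> Fm m n. \<phi> a = x \<and> \<phi> b = y} = {}" using assms by (auto simp: PiE_def Pi_def)
  then show ?thesis by (metis card.empty zero_le)
qed

lemma cnt3:
  assumes "a \<in> {1..m}" "b \<in> {1..m}" "a \<noteq> b"
  shows "card {\<phi> \<in> Fm m n. \<phi> a = \<phi> b} \<le> n ^ (m - 1)"
proof -
  have "{\<phi> \<in> Fm m n. \<phi> a = \<phi> b} = (\<Union>x\<in>{1..n}. {\<phi> \<in> Fm m n. \<phi> a = x \<and> \<phi> b = x})"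
    using assms by (auto simp: PiE_def Pi_def)
  then have "card {\<phi> \<in> Fm m n. \<phi> a = \<phi> b} \<le> (\<Sum>x\<in>{1..n}. card {\<phi> \<in> Fm m n. \<phi> a = x \<and> \<phi> b = x})"
    by (simp add: card_UN_le)
  also have "\<dots> \<le> (\<Sum>x\<in>{1..n}. n ^ (m - 2))"
    by (intro sum_mono cnt2[OF assms])
  also have "\<dots> = n * n ^ (m - 2)" by simp
  also have "\<dots> = n ^ (m - 1)"
  proof -
    have "m \<ge> 2" using assms by auto
    then have "m - 1 = Suc (m - 2)" by simp
    then show ?thesis by simp
  qed
  finally show ?thesis .
qed

lemma cnt4:
  shows "card {\<phi> \<in> Fm m n. w \<in> \<phi> ` {1..m}} \<le> m * n ^ (m - 1)"
proof -
  have "{\<phi> \<in> Fm m n. w \<in> \<phi> ` {1..m}} = (\<Union>a\<in>{1..m}. {\<phi> \<in> Fm m n. \<phi> a = w})"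
    by auto
  then have "card {\<phi> \<in> Fm m n. w \<in> \<phi> ` {1..m}} \<le> (\<Sum>a\<in>{1..m}. card {\<phi> \<in> Fm m n. \<phi> a = w})"
    by (simp add: card_UN_le)
  also have "\<dots> \<le> (\<Sum>a\<in>{1..m}. n ^ (m - 1))"
    by (intro sum_mono cnt1_le) auto
  finally show ?thesis by simp
qed

lemma inj_maps_sub: "inj_maps m n \<subseteq> Fm m n"
  by (auto simp: inj_maps_def)

lemma finite_inj_maps: "finite (inj_maps m n)"
  using finite_subset[OF inj_maps_sub finite_Fm] .

lemma noninj_card: "card (Fm m n - inj_maps m n) \<le> m * m * n ^ (m - 1)"
proof -
  have "Fm m n - inj_maps m n \<subseteq> (\<Union>a\<in>{1..m}. \<Union>b\<in>{1..m} - {a}. {\<phi> \<in> Fm m n. \<phi> a = \<phi> b})"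
    by (auto simp: inj_maps_def inj_on_def)
  then have "card (Fm m n - inj_maps m n) \<le> card (\<Union>a\<in>{1..m}. \<Union>b\<in>{1..m} - {a}. {\<phi> \<in> Fm m n. \<phi> a = \<phi> b})"
  proof (rule card_mono[rotated])
    show "finite (\<Union>a\<in>{1..m}. \<Union>b\<in>{1..m} - {a}. {\<phi> \<in> Fm m n. \<phi> a = \<phi> b})"
      by (intro finite_UN_I finite_atLeastAtMost finite_Diff fin_Fm_sub)
  qed
  also have "\<dots> \<le> (\<Sum>a\<in>{1..m}. card (\<Union>b\<in>{1..m} - {a}. {\<phi> \<in> Fm m n. \<phi> a = \<phi> b}))"
    by (rule card_UN_le) simp
  also have "\<dots> \<le> (\<Sum>a\<in>{1..m}. \<Sum>b\<in>{1..m} - {a}. card {\<phi> \<in> Fm m n. \<phi> a = \<phi> b})"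
    by (intro sum_mono card_UN_le) simp
  also have "\<dots> \<le> (\<Sum>a\<in>{1..m}. \<Sum>b\<in>{1..m}. n ^ (m - 1))"
  proof (intro sum_mono)
    fix a assume a: "a \<in> {1..m}"
    have "(\<Sum>b\<in>{1..m} - {a}. card {\<phi> \<in> Fm m n. \<phi> a = \<phi> b}) \<le> (\<Sum>b\<in>{1..m} - {a}. n ^ (m - 1))"
      by (intro sum_mono cnt3) (use a in auto)
    also have "\<dots> \<le> (\<Sum>b\<in>{1..m}. n ^ (m - 1))"
      by (intro sum_mono2) auto
    finally show "(\<Sum>b\<in>{1..m} - {a}. card {\<phi> \<in> Fm m n. \<phi> a = \<phi> b}) \<le> (\<Sum>b\<in>{1..m}. n ^ (m - 1))" .
  qed
  also have "\<dots> = m * m * n ^ (m - 1)" by simp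
  finally show ?thesis .
qed

lemma inj_card_lower: "real (card (inj_maps m n)) \<ge> real n ^ m - real (m * m) * real n ^ (m - 1)"
proof -
  have "card (Fm m n) = card (inj_maps m n) + card (Fm m n - inj_maps m n)"
    using card_Diff_subset[OF finite_inj_maps inj_maps_sub] card_mono[OF finite_Fm inj_maps_sub] by simp
  then have "real (n ^ m) \<le> real (card (inj_maps m n)) + real (m * m * n ^ (m - 1))"
    using noninj_card card_Fm by (metis add_left_mono of_nat_add of_nat_le_iff)
  then show ?thesis by simp
qed

lemma inj_card_upper: "card (inj_maps m n) \<le> n ^ m"
  using card_mono[OF finite_Fm inj_maps_sub] card_Fm by simp


lemma fin_Fm_sub'[simp]: "finite {\<phi> \<in> {Suc 0..m} \<rightarrow>\<^sub>E {Suc 0..n}. P \<phi>}"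
  using fin_Fm_sub[of m n P] by simp

lemma sigma_count_le:
  assumes S: "S \<subseteq> Fm m n" and b: "b \<in> {1..m}"
  shows "card {(\<phi>, \<psi>). \<phi> \<in> S \<and> \<psi> \<in> Fm m n \<and> \<psi> b = g \<phi>} \<le> card S * n ^ (m - 1)"
proof -
  have fS: "finite S" using finite_subset[OF S finite_Fm] .
  have "{(\<phi>, \<psi>). \<phi> \<in> S \<and> \<psi> \<in> Fm m n \<and> \<psi> b = g \<phi>} = Sigma S (\<lambda>\<phi>. {\<psi> \<in> Fm m n. \<psi> b = g \<phi>})"
    by auto
  then have "card {(\<phi>, \<psi>). \<phi> \<in> S \<and> \<psi> \<in> Fm m n \<and> \<psi> b = g \<phi>} = (\<Sum>\<phi>\<in>S. card {\<psi> \<in> Fm m n. \<psi> b = g \<phi>})"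
    using fS by (simp add: card_SigmaI fin_Fm_sub)
  also have "\<dots> \<le> (\<Sum>\<phi>\<in>S. n ^ (m - 1))"
    by (intro sum_mono cnt1_le b)
  finally show ?thesis by simp
qed

lemma sigma_count_eq:
  assumes S: "S \<subseteq> Fm m n" and b: "b \<in> {1..m}" and g: "\<And>\<phi>. \<phi> \<in> S \<Longrightarrow> g \<phi> \<in> {1..n}"
  shows "card {(\<phi>, \<psi>). \<phi> \<in> S \<and> \<psi> \<in> Fm m n \<and> \<psi> b = g \<phi>} = card S * n ^ (m - 1)"
proof -
  have fS: "finite S" using finite_subset[OF S finite_Fm] .
  have "{(\<phi>, \<psi>). \<phi> \<in> S \<and> \<psi> \<in> Fm m n \<and> \<psi> b = g \<phi>} = Sigma S (\<lambda>\<phi>. {\<psi> \<in> Fm m n. \<psi> b = g \<phi>})"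
    by auto
  then have "card {(\<phi>, \<psi>). \<phi> \<in> S \<and> \<psi> \<in> Fm m n \<and> \<psi> b = g \<phi>} = (\<Sum>\<phi>\<in>S. card {\<psi> \<in> Fm m n. \<psi> b = g \<phi>})"
    using fS by (simp add: card_SigmaI fin_Fm_sub)
  also have "\<dots> = (\<Sum>\<phi>\<in>S. n ^ (m - 1))"
    by (intro sum.cong refl cnt1 b g)
  finally show ?thesis by simp
qed

lemma sigma_count2_le:
  assumes S: "S \<subseteq> Fm m n" and b: "b \<in> {1..m}" "e \<in> {1..m}" "b \<noteq> e"
  shows "card {(\<phi>, \<psi>). \<phi> \<in> S \<and> \<psi> \<in> Fm m n \<and> \<psi> b = g \<phi> \<and> \<psi> e = h \<phi>} \<le> card S * n ^ (m - 2)"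
proof -
  have fS: "finite S" using finite_subset[OF S finite_Fm] .
  have "{(\<phi>, \<psi>). \<phi> \<in> S \<and> \<psi> \<in> Fm m n \<and> \<psi> b = g \<phi> \<and> \<psi> e = h \<phi>}
      = Sigma S (\<lambda>\<phi>. {\<psi> \<in> Fm m n. \<psi> b = g \<phi> \<and> \<psi> e = h \<phi>})"
    by auto
  then have "card {(\<phi>, \<psi>). \<phi> \<in> S \<and> \<psi> \<in> Fm m n \<and> \<psi> b = g \<phi> \<and> \<psi> e = h \<phi>}
      = (\<Sum>\<phi>\<in>S. card {\<psi> \<in> Fm m n. \<psi> b = g \<phi> \<and> \<psi> e = h \<phi>})"
    using fS by (simp add: card_SigmaI fin_Fm_sub)
  also have "\<dots> \<le> (\<Sum>\<phi>\<in>S. n ^ (m - 2))"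
    by (intro sum_mono cnt2 b)
  finally show ?thesis by simp
qed

lemma card_swap: "card {(\<psi>, \<phi>). P \<phi> \<psi>} = card {(\<phi>, \<psi>). P \<phi> \<psi>}"
proof -
  have "{(\<psi>, \<phi>). P \<phi> \<psi>} = prod.swap ` {(\<phi>, \<psi>). P \<phi> \<psi>}" by auto
  then show ?thesis by (simp add: card_image)
qed

lemma bad_count:
  fixes J :: "'i set" and V :: "'i \<Rightarrow> nat set"
  assumes J: "finite J" and U: "finite U" and VU: "\<And>a. a \<in> J \<Longrightarrow> V a \<subseteq> U"
    and c: "\<And>u. u \<in> U \<Longrightarrow> card {a \<in> J. u \<in> V a} \<le> c"
  shows "card {p \<in> J \<times> J. V (fst p) \<inter> V (snd p) \<noteq> {}} \<le> card U * (c * c)"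
proof -
  have "{p \<in> J \<times> J. V (fst p) \<inter> V (snd p) \<noteq> {}} \<subseteq> (\<Union>u\<in>U. {a \<in> J. u \<in> V a} \<times> {a \<in> J. u \<in> V a})"
    using VU by fastforce
  then have "card {p \<in> J \<times> J. V (fst p) \<inter> V (snd p) \<noteq> {}} \<le> card (\<Union>u\<in>U. {a \<in> J. u \<in> V a} \<times> {a \<in> J. u \<in> V a})"
    by (rule card_mono[rotated]) (use J U in simp)
  also have "\<dots> \<le> (\<Sum>u\<in>U. card ({a \<in> J. u \<in> V a} \<times> {a \<in> J. u \<in> V a}))"
    by (rule card_UN_le[OF U])
  also have "\<dots> \<le> (\<Sum>u\<in>U. c * c)"
    by (intro sum_mono) (simp add: card_cartesian_product c mult_mono)
  finally show ?thesis by simp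
qed


context MM begin

lemma conc:
  fixes J :: "'i set" and Pf :: "'i \<Rightarrow> (nat \<times> nat) set"
  assumes J: "finite J" and Pf: "\<And>a. a \<in> J \<Longrightarrow> Pf a \<subseteq> pairs n"
    and \<delta>: "\<delta> > 0" and D: "D > 0"
  shows "prob {\<omega> \<in> space M. \<delta> \<le> \<bar>(\<Sum>a\<in>J. indicator (Ev n (Pf a)) \<omega>) / D - (\<Sum>a\<in>J. Iw n (Pf a)) / D\<bar>}
     \<le> real (card {p \<in> J \<times> J. verts (Pf (fst p)) \<inter> verts (Pf (snd p)) \<noteq> {}}) / (D * \<delta>)\<^sup>2"
proof -
  define u where "u \<omega> = (\<Sum>a\<in>J. indicator (Ev n (Pf a)) \<omega> - Iw n (Pf a))\<^sup>2" for \<omega>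
  have um: "u \<in> borel_measurable M"
    unfolding u_def using Ev_sets finite_sub_pairs Pf
    by (intro borel_measurable_power borel_measurable_sum borel_measurable_diff borel_measurable_indicator) auto
  have ub: "\<And>\<omega>. \<bar>u \<omega>\<bar> \<le> real (card J) ^ 2"
  proof -
    fix \<omega>
    have "\<bar>\<Sum>a\<in>J. indicator (Ev n (Pf a)) \<omega> - Iw n (Pf a)\<bar> \<le> (\<Sum>a\<in>J. \<bar>indicator (Ev n (Pf a)) \<omega> - Iw n (Pf a)\<bar>)"
      by (rule sum_abs)
    also have "\<dots> \<le> (\<Sum>a\<in>J. (1::real))"
    proof (rule sum_mono)
      fix a assume "a \<in> J"
      then have "0 \<le> Iw n (Pf a) \<and> Iw n (Pf a) \<le> 1" using Iw_bounds Pf by auto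
      then show "\<bar>indicator (Ev n (Pf a)) \<omega> - Iw n (Pf a)\<bar> \<le> 1"
        by (auto simp: indicator_def)
    qed
    finally have "\<bar>\<Sum>a\<in>J. indicator (Ev n (Pf a)) \<omega> - Iw n (Pf a)\<bar> \<le> real (card J)" by simp
    then show "\<bar>u \<omega>\<bar> \<le> real (card J) ^ 2"
      unfolding u_def by (simp add: power_mono abs_le_square_iff[symmetric])
  qed
  have ui: "integrable M u"
    by (rule integrable_const_bound[where B="real (card J) ^ 2"]) (use ub um in auto)
  have sub: "{\<omega> \<in> space M. \<delta> \<le> \<bar>(\<Sum>a\<in>J. indicator (Ev n (Pf a)) \<omega>) / D - (\<Sum>a\<in>J. Iw n (Pf a)) / D\<bar>}
      \<subseteq> {\<omega> \<in> space M. (D * \<delta>)\<^sup>2 \<le> u \<omega>}"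
  proof (rule subsetI)
    fix \<omega> assume "\<omega> \<in> {\<omega> \<in> space M. \<delta> \<le> \<bar>(\<Sum>a\<in>J. indicator (Ev n (Pf a)) \<omega>) / D - (\<Sum>a\<in>J. Iw n (Pf a)) / D\<bar>}"
    then have om: "\<omega> \<in> space M" and h: "\<delta> \<le> \<bar>(\<Sum>a\<in>J. indicator (Ev n (Pf a)) \<omega>) / D - (\<Sum>a\<in>J. Iw n (Pf a)) / D\<bar>"
      by auto
    define s where "s = (\<Sum>a\<in>J. indicator (Ev n (Pf a)) \<omega> - Iw n (Pf a) :: real)"
    have "(\<Sum>a\<in>J. indicator (Ev n (Pf a)) \<omega>) / D - (\<Sum>a\<in>J. Iw n (Pf a)) / D = s / D"
      unfolding s_def by (simp only: sum_subtractf diff_divide_distrib)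
    with h have h2: "\<delta> \<le> \<bar>s / D\<bar>" by simp
    have "\<bar>s / D\<bar> = \<bar>s\<bar> / D" using D by simp
    with h2 have "\<delta> * D \<le> \<bar>s\<bar>" using D by (simp add: pos_le_divide_eq)
    then have h3: "D * \<delta> \<le> \<bar>s\<bar>" by (simp add: mult.commute)
    have "0 \<le> D * \<delta>" using D \<delta> by simp
    from power_mono[OF h3 this, of 2] have "(D * \<delta>)\<^sup>2 \<le> u \<omega>"
      unfolding u_def s_def by simp
    then show "\<omega> \<in> {\<omega> \<in> space M. (D * \<delta>)\<^sup>2 \<le> u \<omega>}" using om by simp
  qed
  have sets: "{\<omega> \<in> space M. (D * \<delta>)\<^sup>2 \<le> u \<omega>} \<in> sets M" using um by measurable
  have "prob {\<omega> \<in> space M. \<delta> \<le> \<bar>(\<Sum>a\<in>J. indicator (Ev n (Pf a)) \<omega>) / D - (\<Sum>a\<in>J. Iw n (Pf a)) / D\<bar>}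
      \<le> prob {\<omega> \<in> space M. (D * \<delta>)\<^sup>2 \<le> u \<omega>}"
    by (rule finite_measure_mono[OF sub sets])
  also have "\<dots> \<le> (\<integral>\<omega>. u \<omega> \<partial>M) / (D * \<delta>)\<^sup>2"
    by (rule integral_Markov_inequality_measure[OF ui sets]) (use D \<delta> in \<open>auto simp: u_def\<close>)
  also have "\<dots> \<le> real (card {p \<in> J \<times> J. verts (Pf (fst p)) \<inter> verts (Pf (snd p)) \<noteq> {}}) / (D * \<delta>)\<^sup>2"
  proof (rule divide_right_mono)
    show "(\<integral>\<omega>. u \<omega> \<partial>M) \<le> real (card {p \<in> J \<times> J. verts (Pf (fst p)) \<inter> verts (Pf (snd p)) \<noteq> {}})"
      unfolding u_def by (rule var_bound[OF J Pf])
  qed simp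
  finally show ?thesis .
qed

end


lemma card_filter_real:
  assumes "finite S"
  shows "real (card {x \<in> S. P x}) = (\<Sum>x\<in>S. if P x then 1 else 0)"
proof -
  have "real (card {x \<in> S. P x}) = (\<Sum>x\<in>{x \<in> S. P x}. 1)" by simp
  also have "\<dots> = (\<Sum>x\<in>S. if P x then 1 else 0)"
    by (rule sum.inter_filter[OF assms])
  finally show ?thesis .
qed

lemma prod_01:
  assumes "finite E"
  shows "(\<Prod>(a,b)\<in>E. if P a b then 1 else 0 :: real) = (if \<forall>(a,b)\<in>E. P a b then 1 else 0)"
proof (cases "\<forall>(a,b)\<in>E. P a b")
  case True
  then have "(\<Prod>(a,b)\<in>E. if P a b then 1 else 0 :: real) = (\<Prod>(a,b)\<in>E. 1)"
    by (intro prod.cong) auto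
  then show ?thesis using True by simp
next
  case False
  then obtain a b where ab: "(a,b) \<in> E" "\<not> P a b" by auto
  have "(\<Prod>(a,b)\<in>E. if P a b then 1 else 0 :: real) = 0"
    by (rule prod_zero[OF assms]) (use ab in force)
  then show ?thesis using False by simp
qed

locale MF = MM M d W \<xi> A k + FW "W k" m E
  for M :: "'a measure" and d W \<xi> A k m E
begin

abbreviation PE :: "(nat \<Rightarrow> nat) \<Rightarrow> (nat \<times> nat) set" where
  "PE f \<equiv> emap f ` E"

lemma emap_pairs:
  assumes f: "f \<in> inj_maps m n"
  shows "PE f \<subseteq> pairs n"
proof
  fix p assume "p \<in> PE f"
  then obtain a b where ab: "(a,b) \<in> E" "p = emap f (a,b)" by auto
  have abm: "a \<in> {1..m}" "b \<in> {1..m}" "a < b" using E_sub ab(1) by auto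
  have "f a \<noteq> f b" using inj_maps_D(1)[OF f] abm by (metis inj_onD less_irrefl)
  moreover have "f a \<in> {1..n}" "f b \<in> {1..n}" using inj_maps_D(2)[OF f] abm by auto
  ultimately show "p \<in> pairs n" unfolding ab(2) emap_def pairs_def by (auto simp: min_def max_def)
qed

lemma hom_iff:
  assumes f: "f \<in> inj_maps m n" and \<omega>: "\<omega> \<in> space M"
  shows "(\<forall>(a,b)\<in>E. layer_adj n A k \<omega> (f a) (f b)) \<longleftrightarrow> \<omega> \<in> Ev n (PE f)"
proof -
  have key: "\<And>a b. (a,b) \<in> E \<Longrightarrow> layer_adj n A k \<omega> (f a) (f b) \<longleftrightarrow>
      (\<forall>l\<in>k. A n l (fst (emap f (a,b))) (snd (emap f (a,b))) \<omega>)"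
  proof -
    fix a b assume ab: "(a,b) \<in> E"
    have abm: "a \<in> {1..m}" "b \<in> {1..m}" "a < b" using E_sub ab by auto
    have ne: "f a \<noteq> f b" using inj_maps_D(1)[OF f] abm by (metis inj_onD less_irrefl)
    have r: "f a \<in> {1..n}" "f b \<in> {1..n}" using inj_maps_D(2)[OF f] abm by auto
    show "layer_adj n A k \<omega> (f a) (f b) \<longleftrightarrow> (\<forall>l\<in>k. A n l (fst (emap f (a,b))) (snd (emap f (a,b))) \<omega>)"
      using ne r unfolding layer_adj_def madj_def emap_def by (auto simp: min_def max_def)
  qed
  show ?thesis
    unfolding Ev_def using \<omega> key by fastforce
qed

lemma homs_filter:
  assumes \<omega>: "\<omega> \<in> space M"
  shows "{\<phi> \<in> inj_homs m E n (layer_adj n A k \<omega>). P \<phi>} = {\<phi> \<in> inj_maps m n. P \<phi> \<and> \<omega> \<in> Ev n (PE \<phi>)}"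
proof (rule set_eqI)
  fix \<phi>
  show "\<phi> \<in> {\<phi> \<in> inj_homs m E n (layer_adj n A k \<omega>). P \<phi>} \<longleftrightarrow> \<phi> \<in> {\<phi> \<in> inj_maps m n. P \<phi> \<and> \<omega> \<in> Ev n (PE \<phi>)}"
  proof (cases "\<phi> \<in> inj_maps m n")
    case True
    then show ?thesis using hom_iff[OF True \<omega>] unfolding inj_homs_def by auto
  next
    case False
    then show ?thesis unfolding inj_homs_def by auto
  qed
qed

definition Ca :: "nat \<Rightarrow> nat \<Rightarrow> nat \<Rightarrow> 'a \<Rightarrow> real" where
  "Ca n a v \<omega> = (\<Sum>f\<in>{f \<in> inj_maps m n. f a = v}. indicator (Ev n (PE f)) \<omega>)"

definition Hc :: "nat \<Rightarrow> 'a \<Rightarrow> real" where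
  "Hc n \<omega> = (\<Sum>f\<in>inj_maps m n. indicator (Ev n (PE f)) \<omega>)"

lemma finite_inj_filter: "finite {f \<in> inj_maps m n. P f}"
  using finite_inj_maps by simp

lemma t_tilde_eq:
  assumes \<omega>: "\<omega> \<in> space M"
  shows "t_tilde a v m E n (layer_adj n A k \<omega>) = Ca n a v \<omega> / real n ^ (m - 1)"
proof -
  have "real (card {\<phi> \<in> inj_homs m E n (layer_adj n A k \<omega>). \<phi> a = v})
      = real (card {\<phi> \<in> {f \<in> inj_maps m n. f a = v}. \<omega> \<in> Ev n (PE \<phi>)})"
    using homs_filter[OF \<omega>, where P="\<lambda>\<phi>. \<phi> a = v"] by (simp add: conj_commute) (metis (mono_tags, lifting))
  also have "\<dots> = Ca n a v \<omega>"
    unfolding Ca_def by (subst card_filter_real[OF finite_inj_filter]) (simp add: indicator_def of_bool_def)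
  finally show ?thesis unfolding t_tilde_def by simp
qed

lemma t_hat_eq:
  assumes \<omega>: "\<omega> \<in> space M"
  shows "t_hat m E n (layer_adj n A k \<omega>) = Hc n \<omega> / real (card (inj_maps m n))"
proof -
  have "(\<Sum>s\<in>inj_maps m n. \<Prod>(a,b)\<in>E. if layer_adj n A k \<omega> (s a) (s b) then 1 else 0 :: real)
      = (\<Sum>s\<in>inj_maps m n. if \<forall>(a,b)\<in>E. layer_adj n A k \<omega> (s a) (s b) then 1 else 0)"
    by (intro sum.cong refl prod_01 finE)
  also have "\<dots> = Hc n \<omega>"
    unfolding Hc_def using hom_iff[OF _ \<omega>] by (intro sum.cong refl) (simp add: indicator_def)
  finally show ?thesis unfolding t_hat_def by simp
qed

lemma sum_Ca:
  assumes a: "a \<in> {1..m}"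
  shows "(\<Sum>v=1..n. Ca n a v \<omega>) = Hc n \<omega>"
  unfolding Ca_def Hc_def
proof (rule sum.group)
  show "finite (inj_maps m n)" by (rule finite_inj_maps)
  show "(\<lambda>f. f a) ` inj_maps m n \<subseteq> {1..n}" using inj_maps_D(2) a by blast
qed simp

end


context MF begin

definition K :: "nat \<Rightarrow> nat \<Rightarrow> nat \<Rightarrow> ((nat \<Rightarrow> nat) \<times> (nat \<Rightarrow> nat)) set" where
  "K n a b = {p \<in> inj_maps m n \<times> inj_maps m n. fst p a = snd p b}"

lemma finite_K: "finite (K n a b)"
  unfolding K_def using finite_inj_maps by simp

lemma sum_Ca_prod:
  assumes a: "a \<in> {1..m}"
  shows "(\<Sum>v=1..n. Ca n a v \<omega> * Ca n b v \<omega>)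
     = (\<Sum>p\<in>K n a b. indicator (Ev n (PE (fst p) \<union> PE (snd p))) \<omega>)"
proof -
  have "(\<Sum>v=1..n. Ca n a v \<omega> * Ca n b v \<omega>)
      = (\<Sum>v=1..n. \<Sum>p\<in>{f \<in> inj_maps m n. f a = v} \<times> {g \<in> inj_maps m n. g b = v}.
            indicator (Ev n (PE (fst p) \<union> PE (snd p))) \<omega>)"
  proof (rule sum.cong[OF refl])
    fix v
    show "Ca n a v \<omega> * Ca n b v \<omega> = (\<Sum>p\<in>{f \<in> inj_maps m n. f a = v} \<times> {g \<in> inj_maps m n. g b = v}.
            indicator (Ev n (PE (fst p) \<union> PE (snd p))) \<omega>)"
      unfolding Ca_def sum_product sum.cartesian_product
      by (intro sum.cong refl) (auto simp: ind_Ev_mult)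
  qed
  also have "\<dots> = (\<Sum>v=1..n. \<Sum>p\<in>{p \<in> K n a b. fst p a = v}. indicator (Ev n (PE (fst p) \<union> PE (snd p))) \<omega>)"
  proof (rule sum.cong[OF refl])
    fix v
    have "{f \<in> inj_maps m n. f a = v} \<times> {g \<in> inj_maps m n. g b = v} = {p \<in> K n a b. fst p a = v}"
      unfolding K_def by auto
    then show "(\<Sum>p\<in>{f \<in> inj_maps m n. f a = v} \<times> {g \<in> inj_maps m n. g b = v}. indicator (Ev n (PE (fst p) \<union> PE (snd p))) \<omega>)
      = (\<Sum>p\<in>{p \<in> K n a b. fst p a = v}. indicator (Ev n (PE (fst p) \<union> PE (snd p))) \<omega>)" by simp
  qed
  also have "\<dots> = (\<Sum>p\<in>K n a b. indicator (Ev n (PE (fst p) \<union> PE (snd p))) \<omega>)"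
  proof (rule sum.group)
    show "finite (K n a b)" by (rule finite_K)
    show "(\<lambda>p. fst p a) ` K n a b \<subseteq> {1..n}"
    proof
      fix x assume "x \<in> (\<lambda>p. fst p a) ` K n a b"
      then obtain p where p: "p \<in> K n a b" "x = fst p a" by blast
      then have "fst p \<in> inj_maps m n" unfolding K_def by auto
      then show "x \<in> {1..n}" using inj_maps_D(2)[OF _ a] p(2) by blast
    qed
  qed simp
  finally show ?thesis .
qed

definition S2 :: "nat \<Rightarrow> 'a \<Rightarrow> real" where
  "S2 n \<omega> = (\<Sum>a=1..m. \<Sum>b=1..m. \<Sum>p\<in>K n a b. indicator (Ev n (PE (fst p) \<union> PE (snd p))) \<omega>)"

lemma join_eq:
  assumes \<omega>: "\<omega> \<in> space M"
  shows "(\<Sum>a=1..m. \<Sum>b=1..m. t_hat_join a b m E n (layer_adj n A k \<omega>))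
     = S2 n \<omega> / (real n ^ (m - 1) * real n ^ (m - 1) * real n)"
proof -
  have "(\<Sum>a=1..m. \<Sum>b=1..m. t_hat_join a b m E n (layer_adj n A k \<omega>))
     = (\<Sum>a=1..m. \<Sum>b=1..m. (\<Sum>v=1..n. Ca n a v \<omega> * Ca n b v \<omega>) / (real n ^ (m - 1) * real n ^ (m - 1) * real n))"
    unfolding t_hat_join_def t_tilde_eq[OF \<omega>]
    by (simp add: sum_divide_distrib[symmetric] mult.assoc)
  also have "\<dots> = (\<Sum>a=1..m. \<Sum>b=1..m. \<Sum>p\<in>K n a b. indicator (Ev n (PE (fst p) \<union> PE (snd p))) \<omega>)
                  / (real n ^ (m - 1) * real n ^ (m - 1) * real n)"
  proof -
    have "(\<Sum>a=1..m. \<Sum>b=1..m. \<Sum>v=1..n. Ca n a v \<omega> * Ca n b v \<omega>)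
        = (\<Sum>a=1..m. \<Sum>b=1..m. \<Sum>p\<in>K n a b. indicator (Ev n (PE (fst p) \<union> PE (snd p))) \<omega>)"
      by (intro sum.cong refl sum_Ca_prod) simp
    then show ?thesis by (simp add: sum_divide_distrib[symmetric])
  qed
  finally show ?thesis unfolding S2_def .
qed

lemma CS_join:
  assumes \<omega>: "\<omega> \<in> space M" and n: "n \<ge> 1" and m: "m \<ge> 1"
  shows "(\<Sum>a=1..m. \<Sum>b=1..m. t_hat_join a b m E n (layer_adj n A k \<omega>)) \<ge> real m ^ 2 * (Hc n \<omega> / real n ^ m) ^ 2"
proof -
  define D where "D = real n ^ (m - 1)"
  define s where "s v = (\<Sum>a=1..m. Ca n a v \<omega>)" for v
  have Dn: "D * real n = real n ^ m" unfolding D_def using m by (cases m) (simp_all add: D_def)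
  have Dpos: "D > 0" unfolding D_def using n by simp
  have eq: "(\<Sum>a=1..m. \<Sum>b=1..m. t_hat_join a b m E n (layer_adj n A k \<omega>))
     = (\<Sum>v=1..n. (s v)\<^sup>2) / (D * D * real n)"
  proof -
    have "(\<Sum>a=1..m. \<Sum>b=1..m. t_hat_join a b m E n (layer_adj n A k \<omega>))
       = (\<Sum>a=1..m. \<Sum>b=1..m. \<Sum>v=1..n. Ca n a v \<omega> * Ca n b v \<omega>) / (D * D * real n)"
      unfolding t_hat_join_def t_tilde_eq[OF \<omega>] D_def
      by (simp add: sum_divide_distrib[symmetric] mult.assoc)
    also have "(\<Sum>a=1..m. \<Sum>b=1..m. \<Sum>v=1..n. Ca n a v \<omega> * Ca n b v \<omega>) = (\<Sum>v=1..n. (s v)\<^sup>2)"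
    proof -
      have "(\<Sum>a=1..m. \<Sum>b=1..m. \<Sum>v=1..n. Ca n a v \<omega> * Ca n b v \<omega>)
          = (\<Sum>a=1..m. \<Sum>v=1..n. \<Sum>b=1..m. Ca n a v \<omega> * Ca n b v \<omega>)"
        by (intro sum.cong refl sum.swap)
      also have "\<dots> = (\<Sum>v=1..n. \<Sum>a=1..m. \<Sum>b=1..m. Ca n a v \<omega> * Ca n b v \<omega>)"
        by (rule sum.swap)
      also have "\<dots> = (\<Sum>v=1..n. (s v)\<^sup>2)"
        unfolding s_def power2_eq_square sum_product by (rule refl)
      finally show ?thesis .
    qed
    finally show ?thesis .
  qed
  have ssum: "(\<Sum>v=1..n. s v) = real m * Hc n \<omega>"
  proof -
    have "(\<Sum>v=1..n. s v) = (\<Sum>a=1..m. \<Sum>v=1..n. Ca n a v \<omega>)"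
      unfolding s_def by (rule sum.swap)
    also have "\<dots> = (\<Sum>a=1..m. Hc n \<omega>)"
      by (intro sum.cong refl sum_Ca) simp
    finally show ?thesis by simp
  qed
  have cs: "(\<Sum>v=1..n. s v)\<^sup>2 \<le> (\<Sum>v=1..n. (s v)\<^sup>2) * real n"
    using sum_squared_le_sum_of_squares[of s "{1..n}"] by simp
  have "real m ^ 2 * (Hc n \<omega> / real n ^ m) ^ 2 = (real m * Hc n \<omega>)\<^sup>2 / (D * real n) ^ 2"
    using Dn by (simp add: power_divide power_mult_distrib)
  also have "\<dots> \<le> ((\<Sum>v=1..n. (s v)\<^sup>2) * real n) / (D * real n) ^ 2"
    using cs ssum by (intro divide_right_mono) auto
  also have "\<dots> = (\<Sum>v=1..n. (s v)\<^sup>2) / (D * D * real n)"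
    using n Dpos by (simp add: power2_eq_square field_simps)
  finally show ?thesis using eq by simp
qed

end


context MF begin

lemma verts_PE: "f \<in> inj_maps m n \<Longrightarrow> verts (PE f) \<subseteq> f ` {1..m}"
  unfolding verts_def emap_def using E_sub by (force simp: min_def max_def)

lemma verts_PE_n: "f \<in> inj_maps m n \<Longrightarrow> verts (PE f) \<subseteq> {1..n}"
  using verts_PE inj_maps_D(2) by blast

lemma Hc_bad:
  "card {p \<in> inj_maps m n \<times> inj_maps m n. verts (PE (fst p)) \<inter> verts (PE (snd p)) \<noteq> {}}
     \<le> n * ((m * n ^ (m - 1)) * (m * n ^ (m - 1)))"
proof -
  have "card {p \<in> inj_maps m n \<times> inj_maps m n. verts (PE (fst p)) \<inter> verts (PE (snd p)) \<noteq> {}}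
     \<le> card {1..n} * ((m * n ^ (m - 1)) * (m * n ^ (m - 1)))"
  proof (rule bad_count[OF finite_inj_maps finite_atLeastAtMost])
    show "\<And>f. f \<in> inj_maps m n \<Longrightarrow> verts (PE f) \<subseteq> {1..n}" by (rule verts_PE_n)
    fix u
    have "{f \<in> inj_maps m n. u \<in> verts (PE f)} \<subseteq> {f \<in> Fm m n. u \<in> f ` {1..m}}"
      using verts_PE inj_maps_sub by blast
    then have "card {f \<in> inj_maps m n. u \<in> verts (PE f)} \<le> card {f \<in> Fm m n. u \<in> f ` {1..m}}"
      by (rule card_mono[rotated]) (rule fin_Fm_sub)
    also have "\<dots> \<le> m * n ^ (m - 1)" by (rule cnt4)
    finally show "card {f \<in> inj_maps m n. u \<in> verts (PE f)} \<le> m * n ^ (m - 1)" .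
  qed
  then show ?thesis by simp
qed

definition J2 :: "nat \<Rightarrow> (nat \<times> nat \<times> (nat \<Rightarrow> nat) \<times> (nat \<Rightarrow> nat)) set" where
  "J2 n = Sigma {1..m} (\<lambda>a. Sigma {1..m} (\<lambda>b. K n a b))"

definition Pf2 :: "nat \<times> nat \<times> (nat \<Rightarrow> nat) \<times> (nat \<Rightarrow> nat) \<Rightarrow> (nat \<times> nat) set" where
  "Pf2 \<alpha> = PE (fst (snd (snd \<alpha>))) \<union> PE (snd (snd (snd \<alpha>)))"

lemma finite_J2: "finite (J2 n)"
  unfolding J2_def using finite_K by (intro finite_SigmaI) auto

lemma S2_J2: "S2 n \<omega> = (\<Sum>\<alpha>\<in>J2 n. indicator (Ev n (Pf2 \<alpha>)) \<omega>)"
proof -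
  have "S2 n \<omega> = (\<Sum>a=1..m. \<Sum>(b, p)\<in>Sigma {1..m} (K n a). indicator (Ev n (PE (fst p) \<union> PE (snd p))) \<omega>)"
    unfolding S2_def by (intro sum.cong refl sum.Sigma) (auto simp: finite_K)
  also have "\<dots> = (\<Sum>(a, bp)\<in>J2 n. (\<lambda>(b, p). indicator (Ev n (PE (fst p) \<union> PE (snd p))) \<omega>) bp)"
    unfolding J2_def by (rule sum.Sigma) (auto simp: finite_K intro!: finite_SigmaI)
  also have "\<dots> = (\<Sum>\<alpha>\<in>J2 n. indicator (Ev n (Pf2 \<alpha>)) \<omega>)"
    unfolding Pf2_def by (intro sum.cong refl) (auto simp: case_prod_beta)
  finally show ?thesis .
qed

lemma J2_D:
  assumes "\<alpha> \<in> J2 n"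
  obtains a b f g where "\<alpha> = (a, b, f, g)" "a \<in> {1..m}" "b \<in> {1..m}" "f \<in> inj_maps m n" "g \<in> inj_maps m n" "f a = g b"
  using assms unfolding J2_def K_def by auto

lemma verts_Un: "verts (P \<union> Q) = verts P \<union> verts Q"
  unfolding verts_def by auto

lemma Pf2_pairs: "\<alpha> \<in> J2 n \<Longrightarrow> Pf2 \<alpha> \<subseteq> pairs n"
proof -
  assume "\<alpha> \<in> J2 n"
  then obtain a b f g where "\<alpha> = (a, b, f, g)" "f \<in> inj_maps m n" "g \<in> inj_maps m n" by (rule J2_D)
  then show ?thesis unfolding Pf2_def using emap_pairs by simp
qed

lemma J2_u_count:
  "card {\<alpha> \<in> J2 n. u \<in> verts (Pf2 \<alpha>)} \<le> m * m * (2 * (m * n ^ (m - 1) * n ^ (m - 1)))"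
proof -
  define Sw where "Sw = {f \<in> Fm m n. u \<in> f ` {1..m}}"
  have Sw: "Sw \<subseteq> Fm m n" "card Sw \<le> m * n ^ (m - 1)" unfolding Sw_def using cnt4 by auto
  define X where "X a b = {(f, g). f \<in> Sw \<and> g \<in> Fm m n \<and> g b = f a} \<union> {(f, g). g \<in> Sw \<and> f \<in> Fm m n \<and> f a = g b}" for a b
  have sub: "{\<alpha> \<in> J2 n. u \<in> verts (Pf2 \<alpha>)} \<subseteq> (\<Union>a\<in>{1..m}. \<Union>b\<in>{1..m}. (\<lambda>p. (a, b, p)) ` X a b)"
  proof
    fix \<alpha> assume h: "\<alpha> \<in> {\<alpha> \<in> J2 n. u \<in> verts (Pf2 \<alpha>)}"
    then have "\<alpha> \<in> J2 n" by simp
    then obtain a b f g where al0: "\<alpha> = (a, b, f, g)" "a \<in> {1..m}" "b \<in> {1..m}" "f \<in> inj_maps m n" "g \<in> inj_maps m n"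
      "f a = g b" by (rule J2_D)
    have "u \<in> verts (Pf2 \<alpha>)" using h by simp
    then have "u \<in> verts (PE f) \<union> verts (PE g)" unfolding al0(1) Pf2_def verts_Un by simp
    note al = al0 this
    have fg: "f \<in> Fm m n" "g \<in> Fm m n" using al inj_maps_sub by auto
    have "u \<in> f ` {1..m} \<or> u \<in> g ` {1..m}" using al(7) verts_PE[OF al(4)] verts_PE[OF al(5)] by blast
    then have "(f, g) \<in> X a b"
    proof
      assume "u \<in> f ` {1..m}"
      then have "f \<in> Sw" unfolding Sw_def using fg by simp
      then show "(f, g) \<in> X a b" unfolding X_def using fg al(6) by simp
    next
      assume "u \<in> g ` {1..m}"
      then have "g \<in> Sw" unfolding Sw_def using fg by simp
      then show "(f, g) \<in> X a b" unfolding X_def using fg al(6) by simp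
    qed
    then show "\<alpha> \<in> (\<Union>a\<in>{1..m}. \<Union>b\<in>{1..m}. (\<lambda>p. (a, b, p)) ` X a b)" using al by blast
  qed
  have cX: "\<And>a b. a \<in> {1..m} \<Longrightarrow> b \<in> {1..m} \<Longrightarrow> card (X a b) \<le> 2 * (m * n ^ (m - 1) * n ^ (m - 1))"
  proof -
    fix a b assume a: "a \<in> {1..m}" and b: "b \<in> {1..m}"
    have c1: "card {(f, g). f \<in> Sw \<and> g \<in> Fm m n \<and> g b = f a} \<le> card Sw * n ^ (m - 1)"
      by (rule sigma_count_le[OF Sw(1) b])
    have "card {(f, g). g \<in> Sw \<and> f \<in> Fm m n \<and> f a = g b} = card {(g, f). g \<in> Sw \<and> f \<in> Fm m n \<and> f a = g b}"
      by (rule card_swap[where P="\<lambda>g f. g \<in> Sw \<and> f \<in> Fm m n \<and> f a = g b"])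
    also have "\<dots> \<le> card Sw * n ^ (m - 1)"
      by (rule sigma_count_le[OF Sw(1) a])
    finally have c2: "card {(f, g). g \<in> Sw \<and> f \<in> Fm m n \<and> f a = g b} \<le> card Sw * n ^ (m - 1)" .
    have "card (X a b) \<le> card {(f, g). f \<in> Sw \<and> g \<in> Fm m n \<and> g b = f a} + card {(f, g). g \<in> Sw \<and> f \<in> Fm m n \<and> f a = g b}"
      unfolding X_def by (rule card_Un_le)
    also have "\<dots> \<le> 2 * (card Sw * n ^ (m - 1))" using c1 c2 by simp
    also have "\<dots> \<le> 2 * (m * n ^ (m - 1) * n ^ (m - 1))" using Sw(2) by simp
    finally show "card (X a b) \<le> 2 * (m * n ^ (m - 1) * n ^ (m - 1))" .
  qed
  have finX: "\<And>a b. finite (X a b)"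
  proof -
    fix a b
    have "X a b \<subseteq> Fm m n \<times> Fm m n" unfolding X_def using Sw(1) by auto
    then show "finite (X a b)" by (rule finite_subset) (intro finite_cartesian_product finite_Fm)
  qed
  have "card {\<alpha> \<in> J2 n. u \<in> verts (Pf2 \<alpha>)} \<le> card (\<Union>a\<in>{1..m}. \<Union>b\<in>{1..m}. (\<lambda>p. (a, b, p)) ` X a b)"
    by (rule card_mono[OF _ sub]) (intro finite_UN_I finite_atLeastAtMost finite_imageI finX)
  also have "\<dots> \<le> (\<Sum>a\<in>{1..m}. card (\<Union>b\<in>{1..m}. (\<lambda>p. (a, b, p)) ` X a b))"
    by (rule card_UN_le) simp
  also have "\<dots> \<le> (\<Sum>a\<in>{1..m}. \<Sum>b\<in>{1..m}. card ((\<lambda>p. (a, b, p)) ` X a b))"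
    by (intro sum_mono card_UN_le) simp
  also have "\<dots> \<le> (\<Sum>a\<in>{1..m}. \<Sum>b\<in>{1..m}. card (X a b))"
    by (intro sum_mono card_image_le finX)
  also have "\<dots> \<le> (\<Sum>a\<in>{1..m}. \<Sum>b\<in>{1..m}. 2 * (m * n ^ (m - 1) * n ^ (m - 1)))"
    by (intro sum_mono cX)
  also have "\<dots> = m * m * (2 * (m * n ^ (m - 1) * n ^ (m - 1)))" by simp
  finally show ?thesis .
qed

lemma S2_bad:
  "card {p \<in> J2 n \<times> J2 n. verts (Pf2 (fst p)) \<inter> verts (Pf2 (snd p)) \<noteq> {}}
     \<le> n * ((m * m * (2 * (m * n ^ (m - 1) * n ^ (m - 1)))) * (m * m * (2 * (m * n ^ (m - 1) * n ^ (m - 1)))))"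
proof -
  have "card {p \<in> J2 n \<times> J2 n. verts (Pf2 (fst p)) \<inter> verts (Pf2 (snd p)) \<noteq> {}}
     \<le> card {1..n} * ((m * m * (2 * (m * n ^ (m - 1) * n ^ (m - 1)))) * (m * m * (2 * (m * n ^ (m - 1) * n ^ (m - 1)))))"
  proof (rule bad_count[OF finite_J2 finite_atLeastAtMost])
    fix \<alpha> assume "\<alpha> \<in> J2 n"
    then obtain a b f g where "\<alpha> = (a, b, f, g)" "f \<in> inj_maps m n" "g \<in> inj_maps m n" by (rule J2_D)
    then show "verts (Pf2 \<alpha>) \<subseteq> {1..n}"
      unfolding Pf2_def verts_Un using verts_PE_n by simp
  qed (rule J2_u_count)
  then show ?thesis by simp
qed

end


context MF begin

abbreviation tt :: real where "tt \<equiv> hom_density m E (W k)"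

lemma Iw_PE: "f \<in> inj_maps m n \<Longrightarrow> Iw n (PE f) = tt"
  unfolding Iw_def by (rule hom_prob)

lemma K_pairs: "p \<in> K n a b \<Longrightarrow> PE (fst p) \<union> PE (snd p) \<subseteq> pairs n"
proof -
  assume "p \<in> K n a b"
  then have "fst p \<in> inj_maps m n" "snd p \<in> inj_maps m n" unfolding K_def by auto
  then show ?thesis using emap_pairs[of "fst p" n] emap_pairs[of "snd p" n] by (simp only: Un_least)
qed

lemma K_fin: "p \<in> K n a b \<Longrightarrow> finite (PE (fst p) \<union> PE (snd p))"
  by (rule finite_sub_pairs[OF K_pairs])

lemma Hc_integrable: "integrable M (Hc n)"
  unfolding Hc_def by (intro Bochner_Integration.integrable_sum ind_Ev_integrable finite_sub_pairs emap_pairs)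

lemma E_Hc: "(\<integral>\<omega>. Hc n \<omega> \<partial>M) = real (card (inj_maps m n)) * tt"
proof -
  have "(\<integral>\<omega>. Hc n \<omega> \<partial>M) = (\<Sum>f\<in>inj_maps m n. \<integral>\<omega>. indicator (Ev n (PE f)) \<omega> \<partial>M)"
    unfolding Hc_def
    by (rule Bochner_Integration.integral_sum) (intro ind_Ev_integrable finite_sub_pairs emap_pairs)
  also have "\<dots> = (\<Sum>f\<in>inj_maps m n. tt)"
  proof (rule sum.cong[OF refl])
    fix f assume f: "f \<in> inj_maps m n"
    show "(\<integral>\<omega>. indicator (Ev n (PE f)) \<omega> \<partial>M) = tt"
      using ind_Ev_integral[OF emap_pairs[OF f]] Iw_PE[OF f] by simp
  qed
  finally show ?thesis by simp
qed

lemma S2_integrable: "integrable M (S2 n)"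
  unfolding S2_J2[abs_def]
  by (intro Bochner_Integration.integrable_sum ind_Ev_integrable finite_sub_pairs Pf2_pairs)

lemma E_S2: "(\<integral>\<omega>. S2 n \<omega> \<partial>M) = (\<Sum>a=1..m. \<Sum>b=1..m. \<Sum>p\<in>K n a b. Iw n (PE (fst p) \<union> PE (snd p)))"
proof -
  have "(\<integral>\<omega>. S2 n \<omega> \<partial>M) = (\<Sum>a=1..m. \<integral>\<omega>. (\<Sum>b=1..m. \<Sum>p\<in>K n a b. indicator (Ev n (PE (fst p) \<union> PE (snd p))) \<omega>) \<partial>M)"
    unfolding S2_def
    by (rule Bochner_Integration.integral_sum)
       (intro Bochner_Integration.integrable_sum ind_Ev_integrable K_fin)
  also have "\<dots> = (\<Sum>a=1..m. \<Sum>b=1..m. \<integral>\<omega>. (\<Sum>p\<in>K n a b. indicator (Ev n (PE (fst p) \<union> PE (snd p))) \<omega>) \<partial>M)"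
    by (intro sum.cong refl Bochner_Integration.integral_sum Bochner_Integration.integrable_sum ind_Ev_integrable K_fin)
  also have "\<dots> = (\<Sum>a=1..m. \<Sum>b=1..m. \<Sum>p\<in>K n a b. \<integral>\<omega>. indicator (Ev n (PE (fst p) \<union> PE (snd p))) \<omega> \<partial>M)"
    by (intro sum.cong refl Bochner_Integration.integral_sum ind_Ev_integrable K_fin)
  also have "\<dots> = (\<Sum>a=1..m. \<Sum>b=1..m. \<Sum>p\<in>K n a b. Iw n (PE (fst p) \<union> PE (snd p)))"
    by (intro sum.cong refl ind_Ev_integral K_pairs)
  finally show ?thesis .
qed

end


lemma card_Fm'[simp]: "card ({Suc 0..m} \<rightarrow>\<^sub>E {Suc 0..n}) = n ^ m"
  using card_Fm[of m n] by simp

lemma finite_Fm'[simp]: "finite ({Suc 0..m} \<rightarrow>\<^sub>E {Suc 0..n})"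
  using finite_Fm[of m n] by simp

context MF begin

lemma K_sub: "K n a b \<subseteq> {(f, g). f \<in> Fm m n \<and> g \<in> Fm m n \<and> g b = f a}"
  unfolding K_def using inj_maps_sub by auto

lemma K_upper:
  assumes b: "b \<in> {1..m}"
  shows "card (K n a b) \<le> n ^ m * n ^ (m - 1)"
proof -
  have "card (K n a b) \<le> card {(f, g). f \<in> Fm m n \<and> g \<in> Fm m n \<and> g b = f a}"
    by (rule card_mono[OF _ K_sub]) (rule finite_subset[of _ "Fm m n \<times> Fm m n"], auto simp: finite_Fm)
  also have "\<dots> \<le> card (Fm m n) * n ^ (m - 1)"
    by (rule sigma_count_le[OF subset_refl b])
  finally show ?thesis by (simp add: card_Fm)
qed

lemma K_lower:
  assumes a: "a \<in> {1..m}" and b: "b \<in> {1..m}"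
  shows "n ^ m * n ^ (m - 1) \<le> card (K n a b) + 2 * (m * m * n ^ (m - 1) * n ^ (m - 1))"
proof -
  define PP where "PP = {(f, g). f \<in> Fm m n \<and> g \<in> Fm m n \<and> g b = f a}"
  define B1 where "B1 = {(f, g). f \<in> Fm m n - inj_maps m n \<and> g \<in> Fm m n \<and> g b = f a}"
  define B2 where "B2 = {(f, g). g \<in> Fm m n - inj_maps m n \<and> f \<in> Fm m n \<and> f a = g b}"
  have cPP: "card PP = n ^ m * n ^ (m - 1)"
  proof -
    have "card PP = card (Fm m n) * n ^ (m - 1)"
      unfolding PP_def by (rule sigma_count_eq[OF subset_refl b]) (use a in \<open>auto simp: PiE_def Pi_def\<close>)
    then show ?thesis by (simp add: card_Fm)
  qed
  have cB1: "card B1 \<le> m * m * n ^ (m - 1) * n ^ (m - 1)"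
  proof -
    have "card B1 \<le> card (Fm m n - inj_maps m n) * n ^ (m - 1)"
      unfolding B1_def by (rule sigma_count_le[OF _ b]) auto
    also have "\<dots> \<le> m * m * n ^ (m - 1) * n ^ (m - 1)"
      using noninj_card by simp
    finally show ?thesis .
  qed
  have cB2: "card B2 \<le> m * m * n ^ (m - 1) * n ^ (m - 1)"
  proof -
    have "card B2 = card {(g, f). g \<in> Fm m n - inj_maps m n \<and> f \<in> Fm m n \<and> f a = g b}"
      unfolding B2_def by (rule card_swap[where P="\<lambda>g f. g \<in> Fm m n - inj_maps m n \<and> f \<in> Fm m n \<and> f a = g b"])
    also have "\<dots> \<le> card (Fm m n - inj_maps m n) * n ^ (m - 1)"
      by (rule sigma_count_le[OF _ a]) auto
    also have "\<dots> \<le> m * m * n ^ (m - 1) * n ^ (m - 1)"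
      using noninj_card by simp
    finally show ?thesis .
  qed
  have "PP \<subseteq> K n a b \<union> B1 \<union> B2"
    unfolding PP_def K_def B1_def B2_def by auto
  moreover have "finite (K n a b \<union> B1 \<union> B2)"
  proof -
    have "K n a b \<union> B1 \<union> B2 \<subseteq> Fm m n \<times> Fm m n" unfolding K_def B1_def B2_def using inj_maps_sub by auto
    then show ?thesis by (rule finite_subset) (intro finite_cartesian_product finite_Fm)
  qed
  ultimately have "card PP \<le> card (K n a b \<union> B1 \<union> B2)" by (intro card_mono)
  also have "\<dots> \<le> card (K n a b) + card B1 + card B2"
    by (meson card_Un_le add_right_mono order_trans)
  finally show ?thesis using cPP cB1 cB2 by linarith
qed

definition NE :: "nat \<Rightarrow> nat \<Rightarrow> nat \<Rightarrow> ((nat \<Rightarrow> nat) \<times> (nat \<Rightarrow> nat)) set" where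
  "NE n a b = {p \<in> K n a b. fst p ` ({1..m} - {a}) \<inter> snd p ` ({1..m} - {b}) \<noteq> {}}"

lemma NE_card:
  assumes a: "a \<in> {1..m}" and b: "b \<in> {1..m}"
  shows "card (NE n a b) \<le> m * m * (n ^ (m - 1) * n ^ (m - 1))"
proof -
  define X where "X c e = {(f, g). f \<in> Fm m n \<and> g \<in> Fm m n \<and> g b = f a \<and> g e = f c}" for c e
  have sub: "NE n a b \<subseteq> (\<Union>c\<in>{1..m} - {a}. \<Union>e\<in>{1..m} - {b}. X c e)"
  proof
    fix p assume pN: "p \<in> NE n a b"
    obtain f g where pfg: "p = (f, g)" by (cases p)
    have pK: "p \<in> K n a b" and pI: "fst p ` ({1..m} - {a}) \<inter> snd p ` ({1..m} - {b}) \<noteq> {}"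
      using pN unfolding NE_def by simp_all
    have p: "p = (f, g)" "f \<in> inj_maps m n" "g \<in> inj_maps m n" "f a = g b"
      "f ` ({1..m} - {a}) \<inter> g ` ({1..m} - {b}) \<noteq> {}"
      using pK pI pfg unfolding K_def by simp_all
    from p(5) obtain y where y: "y \<in> f ` ({1..m} - {a})" "y \<in> g ` ({1..m} - {b})" by blast
    from y(1) obtain c where c: "c \<in> {1..m} - {a}" "y = f c" by blast
    from y(2) obtain e where e: "e \<in> {1..m} - {b}" "y = g e" by blast
    have ce: "c \<in> {1..m} - {a}" "e \<in> {1..m} - {b}" "f c = g e" using c e by auto
    have "f \<in> Fm m n" "g \<in> Fm m n" using p inj_maps_sub by auto
    then have "(f, g) \<in> X c e" unfolding X_def using p(4) ce(3) by simp
    then show "p \<in> (\<Union>c\<in>{1..m} - {a}. \<Union>e\<in>{1..m} - {b}. X c e)" using ce p(1) by blast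
  qed
  have cX: "\<And>c e. c \<in> {1..m} - {a} \<Longrightarrow> e \<in> {1..m} - {b} \<Longrightarrow> card (X c e) \<le> n ^ (m - 1) * n ^ (m - 1)"
  proof -
    fix c e assume c: "c \<in> {1..m} - {a}" and e: "e \<in> {1..m} - {b}"
    have m2: "m \<ge> 2" using a c by auto
    have "card (X c e) \<le> card (Fm m n) * n ^ (m - 2)"
      unfolding X_def by (rule sigma_count2_le[OF subset_refl b]) (use e in auto)
    also have "\<dots> = n ^ (m - 1) * n ^ (m - 1)"
    proof -
      obtain j where j: "m = Suc (Suc j)" using m2 by (metis add_2_eq_Suc le_Suc_ex)
      have "n ^ m * n ^ (m - 2) = n ^ (m - 1) * n ^ (m - 1)"
        unfolding j by (simp flip: power_add)
      then show ?thesis by (simp add: card_Fm)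
    qed
    finally show "card (X c e) \<le> n ^ (m - 1) * n ^ (m - 1)" .
  qed
  have finX: "\<And>c e. finite (X c e)"
  proof -
    fix c e
    have "X c e \<subseteq> Fm m n \<times> Fm m n" unfolding X_def by auto
    then show "finite (X c e)" by (rule finite_subset) (intro finite_cartesian_product finite_Fm)
  qed
  have "card (NE n a b) \<le> card (\<Union>c\<in>{1..m} - {a}. \<Union>e\<in>{1..m} - {b}. X c e)"
    by (rule card_mono[OF _ sub]) (intro finite_UN_I finite_Diff finite_atLeastAtMost finX)
  also have "\<dots> \<le> (\<Sum>c\<in>{1..m} - {a}. card (\<Union>e\<in>{1..m} - {b}. X c e))"
    by (rule card_UN_le) simp
  also have "\<dots> \<le> (\<Sum>c\<in>{1..m} - {a}. \<Sum>e\<in>{1..m} - {b}. card (X c e))"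
    by (intro sum_mono card_UN_le) simp
  also have "\<dots> \<le> (\<Sum>c\<in>{1..m} - {a}. \<Sum>e\<in>{1..m} - {b}. n ^ (m - 1) * n ^ (m - 1))"
    by (intro sum_mono cX)
  also have "\<dots> = card ({1..m} - {a}) * (card ({1..m} - {b}) * (n ^ (m - 1) * n ^ (m - 1)))"
    by simp
  also have "\<dots> \<le> m * (m * (n ^ (m - 1) * n ^ (m - 1)))"
  proof (intro mult_le_mono mult_le_mono1 order_refl)
    show "card ({1..m} - {a}) \<le> m" "card ({1..m} - {b}) \<le> m"
      using card_Diff1_le[of "{1..m}"] by (metis card_atLeastAtMost diff_Suc_1)+
  qed
  also have "\<dots> = m * m * (n ^ (m - 1) * n ^ (m - 1))" by simp
  finally show ?thesis .
qed

end


context MF begin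

definition q :: "nat \<Rightarrow> nat \<Rightarrow> real" where
  "q a b = (\<integral>z. tr a z * tr b z \<partial>U01)"

lemma q_bounds:
  assumes a: "a \<in> {1..m}" and b: "b \<in> {1..m}"
  shows "0 \<le> q a b \<and> q a b \<le> 1"
  unfolding q_def
proof (rule int01[OF prob_space_U01])
  fix z assume "z \<in> space U01"
  then have z: "z \<in> {0..1}" by simp
  show "0 \<le> tr a z * tr b z \<and> tr a z * tr b z \<le> 1"
    using tr_bounds[OF a z] tr_bounds[OF b z] by (simp add: mult_le_one)
qed

lemma exact_disj:
  assumes p: "p \<in> K n a b - NE n a b" and a: "a \<in> {1..m}" and b: "b \<in> {1..m}"
  shows "PE (fst p) \<inter> PE (snd p) = {}"
proof (rule ccontr)
  define f where "f = fst p"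
  define g where "g = snd p"
  have f: "f \<in> inj_maps m n" and g: "g \<in> inj_maps m n" and fg: "f a = g b"
    using p unfolding K_def f_def g_def by auto
  have ex: "f ` ({1..m} - {a}) \<inter> g ` ({1..m} - {b}) = {}"
    using p unfolding NE_def f_def g_def by auto
  assume "PE (fst p) \<inter> PE (snd p) \<noteq> {}"
  then obtain z where z1: "z \<in> PE f" and z2: "z \<in> PE g" unfolding f_def g_def by blast
  from z1 obtain x1 where x1: "x1 \<in> E" "z = emap f x1" by blast
  obtain c c' where cx: "x1 = (c, c')" by (cases x1)
  from z2 obtain x2 where x2: "x2 \<in> E" "z = emap g x2" by blast
  obtain e e' where ex2: "x2 = (e, e')" by (cases x2)
  have cc: "(c, c') \<in> E" and z1': "z = emap f (c, c')" using x1 cx by auto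
  have ee: "(e, e') \<in> E" and z2': "z = emap g (e, e')" using x2 ex2 by auto
  have eq: "emap f (c, c') = emap g (e, e')" using z1' z2' by simp
  have cm: "c \<in> {1..m}" "c' \<in> {1..m}" "c < c'" using E_sub cc by auto
  have em: "e \<in> {1..m}" "e' \<in> {1..m}" "e < e'" using E_sub ee by auto
  have set_eq: "{f c, f c'} = {g e, g e'}"
    using eq unfolding emap_def by (auto simp: min_def max_def split: if_splits)
  have key: "\<And>x. x \<in> {c, c'} \<Longrightarrow> x = a"
  proof (rule ccontr)
    fix x assume x: "x \<in> {c, c'}" and xa: "x \<noteq> a"
    have xm: "x \<in> {1..m}" using x cm by auto
    have "f x \<in> {g e, g e'}" using set_eq x by auto
    then obtain y where y: "y \<in> {e, e'}" "f x = g y" by auto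
    have ym: "y \<in> {1..m}" using y em by auto
    show False
    proof (cases "y = b")
      case True
      then have "f x = f a" using y fg by simp
      then have "x = a" using inj_maps_D(1)[OF f] xm a by (meson inj_onD)
      then show False using xa by simp
    next
      case False
      have "x \<in> {1..m} - {a}" using xm xa by simp
      then have i1: "f x \<in> f ` ({1..m} - {a})" by (rule imageI)
      have "y \<in> {1..m} - {b}" using ym False by simp
      then have "g y \<in> g ` ({1..m} - {b})" by (rule imageI)
      then have i2: "f x \<in> g ` ({1..m} - {b})" using y(2) by simp
      from i1 i2 have "f x \<in> f ` ({1..m} - {a}) \<inter> g ` ({1..m} - {b})" by blast
      then show False using ex by blast
    qed
  qed
  then have "c = a" "c' = a" by auto
  then show False using cm by simp
qed

lemma Iw_exact:
  assumes p: "p \<in> K n a b - NE n a b" and a: "a \<in> {1..m}" and b: "b \<in> {1..m}"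
  shows "Iw n (PE (fst p) \<union> PE (snd p)) = q a b"
proof -
  have f: "fst p \<in> inj_maps m n" and g: "snd p \<in> inj_maps m n" and fg: "fst p a = snd p b"
    using p unfolding K_def by auto
  have ex: "fst p ` ({1..m} - {a}) \<inter> snd p ` ({1..m} - {b}) = {}"
    using p unfolding NE_def by auto
  have "prodW (W k) (PE (fst p) \<union> PE (snd p)) = (\<lambda>x. prodW (W k) (PE (fst p)) x * prodW (W k) (PE (snd p)) x)"
    using prodW_Un[OF finite_sub_pairs[OF emap_pairs[OF f]] finite_sub_pairs[OF emap_pairs[OF g]] exact_disj[OF p a b]]
    by (simp add: fun_eq_iff)
  then have "Iw n (PE (fst p) \<union> PE (snd p)) = (\<integral>x. prodW (W k) (PE (fst p)) x * prodW (W k) (PE (snd p)) x \<partial>PU {1..n})"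
    unfolding Iw_def by simp
  also have "\<dots> = q a b"
    unfolding q_def by (rule glue_prob[OF f g a b fg ex])
  finally show ?thesis .
qed

lemma K_pair_bound:
  assumes a: "a \<in> {1..m}" and b: "b \<in> {1..m}"
  shows "\<bar>(\<Sum>p\<in>K n a b. Iw n (PE (fst p) \<union> PE (snd p))) - real n ^ m * real n ^ (m - 1) * q a b\<bar>
     \<le> 3 * (real m * real m) * (real n ^ (m - 1) * real n ^ (m - 1))"
proof -
  define X where "X = real n ^ (m - 1) * real n ^ (m - 1)"
  define D where "D = real n ^ m * real n ^ (m - 1)"
  have NEK: "NE n a b \<subseteq> K n a b" unfolding NE_def by auto
  have qb: "0 \<le> q a b" "q a b \<le> 1" using q_bounds[OF a b] by auto
  have split: "(\<Sum>p\<in>K n a b. Iw n (PE (fst p) \<union> PE (snd p)))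
      = real (card (K n a b)) * q a b + (\<Sum>p\<in>NE n a b. Iw n (PE (fst p) \<union> PE (snd p)) - q a b)"
  proof -
    have "(\<Sum>p\<in>K n a b. Iw n (PE (fst p) \<union> PE (snd p)) - q a b)
        = (\<Sum>p\<in>NE n a b. Iw n (PE (fst p) \<union> PE (snd p)) - q a b)"
    proof (rule sum.mono_neutral_right[OF finite_K NEK])
      show "\<forall>p\<in>K n a b - NE n a b. Iw n (PE (fst p) \<union> PE (snd p)) - q a b = 0"
        using Iw_exact[OF _ a b] by simp
    qed
    then show ?thesis by (simp add: sum_subtractf)
  qed
  have sNE: "\<bar>\<Sum>p\<in>NE n a b. Iw n (PE (fst p) \<union> PE (snd p)) - q a b\<bar> \<le> real (card (NE n a b))"
  proof -
    have "\<bar>\<Sum>p\<in>NE n a b. Iw n (PE (fst p) \<union> PE (snd p)) - q a b\<bar>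
        \<le> (\<Sum>p\<in>NE n a b. \<bar>Iw n (PE (fst p) \<union> PE (snd p)) - q a b\<bar>)" by (rule sum_abs)
    also have "\<dots> \<le> (\<Sum>p\<in>NE n a b. 1)"
    proof (rule sum_mono)
      fix p assume "p \<in> NE n a b"
      then have "p \<in> K n a b" using NEK by auto
      then have "0 \<le> Iw n (PE (fst p) \<union> PE (snd p)) \<and> Iw n (PE (fst p) \<union> PE (snd p)) \<le> 1"
        by (intro Iw_bounds K_pairs)
      then show "\<bar>Iw n (PE (fst p) \<union> PE (snd p)) - q a b\<bar> \<le> 1" using qb by auto
    qed
    finally show ?thesis by simp
  qed
  have cNE: "real (card (NE n a b)) \<le> real m * real m * X"
  proof -
    have "real (card (NE n a b)) \<le> real (m * m * (n ^ (m - 1) * n ^ (m - 1)))"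
      by (simp only: of_nat_le_iff) (rule NE_card[OF a b])
    then show ?thesis unfolding X_def by simp
  qed
  have cK1: "real (card (K n a b)) \<le> D"
  proof -
    have "real (card (K n a b)) \<le> real (n ^ m * n ^ (m - 1))"
      by (simp only: of_nat_le_iff) (rule K_upper[OF b])
    then show ?thesis unfolding D_def by simp
  qed
  have cK2: "D \<le> real (card (K n a b)) + 2 * (real m * real m * X)"
  proof -
    have "real (n ^ m * n ^ (m - 1)) \<le> real (card (K n a b) + 2 * (m * m * n ^ (m - 1) * n ^ (m - 1)))"
      using K_lower[OF a b, of n] by (simp only: of_nat_le_iff)
    then show ?thesis unfolding D_def X_def by (simp add: algebra_simps)
  qed
  have "real (card (K n a b)) * q a b - D * q a b = - ((D - real (card (K n a b))) * q a b)"
    by (simp add: algebra_simps)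
  moreover have "0 \<le> (D - real (card (K n a b))) * q a b" using cK1 qb by simp
  ultimately have "\<bar>real (card (K n a b)) * q a b - D * q a b\<bar> = (D - real (card (K n a b))) * q a b"
    by simp
  also have "\<dots> \<le> (D - real (card (K n a b))) * 1"
    using cK1 qb by (intro mult_left_mono) auto
  also have "\<dots> \<le> 2 * (real m * real m * X)" using cK2 by simp
  finally have dK: "\<bar>real (card (K n a b)) * q a b - D * q a b\<bar> \<le> 2 * (real m * real m * X)" .
  have "\<bar>(\<Sum>p\<in>K n a b. Iw n (PE (fst p) \<union> PE (snd p))) - D * q a b\<bar>
      \<le> \<bar>real (card (K n a b)) * q a b - D * q a b\<bar> + \<bar>\<Sum>p\<in>NE n a b. Iw n (PE (fst p) \<union> PE (snd p)) - q a b\<bar>"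
    unfolding split by linarith
  also have "\<dots> \<le> 3 * (real m * real m) * X" using dK sNE cNE by linarith
  finally show ?thesis unfolding D_def X_def by simp
qed

definition Qs :: real where
  "Qs = (\<Sum>a=1..m. \<Sum>b=1..m. q a b)"

lemma ES2_bound:
  "\<bar>(\<integral>\<omega>. S2 n \<omega> \<partial>M) - real n ^ m * real n ^ (m - 1) * Qs\<bar>
     \<le> 3 * (real m * real m) * (real m * real m) * (real n ^ (m - 1) * real n ^ (m - 1))"
proof -
  define X where "X = real n ^ (m - 1) * real n ^ (m - 1)"
  define D where "D = real n ^ m * real n ^ (m - 1)"
  define h where "h a b = (\<Sum>p\<in>K n a b. Iw n (PE (fst p) \<union> PE (snd p))) - D * q a b" for a b
  have "D * Qs = (\<Sum>a=1..m. \<Sum>b=1..m. D * q a b)"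
    unfolding Qs_def by (simp only: sum_distrib_left)
  then have "(\<integral>\<omega>. S2 n \<omega> \<partial>M) - D * Qs = (\<Sum>a=1..m. \<Sum>b=1..m. h a b)"
    unfolding E_S2 h_def by (simp only: sum_subtractf)
  then have "\<bar>(\<integral>\<omega>. S2 n \<omega> \<partial>M) - D * Qs\<bar> = \<bar>\<Sum>a=1..m. \<Sum>b=1..m. h a b\<bar>" by simp
  also have "\<dots> \<le> (\<Sum>a=1..m. \<bar>\<Sum>b=1..m. h a b\<bar>)" by (rule sum_abs)
  also have "\<dots> \<le> (\<Sum>a=1..m. \<Sum>b=1..m. \<bar>h a b\<bar>)" by (intro sum_mono sum_abs)
  also have "\<dots> \<le> (\<Sum>a=1..m. \<Sum>b=1..m. 3 * (real m * real m) * X)"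
  proof (intro sum_mono)
    fix a b assume "a \<in> {1..m}" "b \<in> {1..m}"
    then show "\<bar>h a b\<bar> \<le> 3 * (real m * real m) * X"
      unfolding h_def D_def X_def by (rule K_pair_bound)
  qed
  also have "\<dots> = 3 * (real m * real m) * (real m * real m) * X" by simp
  finally show ?thesis unfolding D_def X_def .
qed

end


context MF begin

lemma tr_abs: "a \<in> {1..m} \<Longrightarrow> z \<in> space U01 \<Longrightarrow> \<bar>tr a z\<bar> \<le> 1"
  using tr_bounds[of a z] by simp

lemma tr_tr_abs: "a \<in> {1..m} \<Longrightarrow> b \<in> {1..m} \<Longrightarrow> z \<in> space U01 \<Longrightarrow> \<bar>tr a z * tr b z\<bar> \<le> 1"
  using tr_abs[of a z] tr_abs[of b z] by (simp add: abs_mult mult_le_one)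

lemma tr_tr_meas: "a \<in> {1..m} \<Longrightarrow> b \<in> {1..m} \<Longrightarrow> (\<lambda>z. tr a z * tr b z) \<in> borel_measurable U01"
  using tr_meas[of a] tr_meas[of b] by simp

definition gs :: "real \<Rightarrow> real" where
  "gs z = (\<Sum>a=1..m. tr a z)"

lemma gs_meas: "gs \<in> borel_measurable U01"
  unfolding gs_def by (intro borel_measurable_sum tr_meas) auto

lemma gs_bound: "z \<in> space U01 \<Longrightarrow> \<bar>gs z\<bar> \<le> real m"
proof -
  assume "z \<in> space U01"
  then have z: "z \<in> {0..1}" by simp
  have "\<bar>gs z\<bar> \<le> (\<Sum>a=1..m. \<bar>tr a z\<bar>)" unfolding gs_def by (rule sum_abs)
  also have "\<dots> \<le> (\<Sum>a=1..m. 1)" by (intro sum_mono tr_abs) (use z in auto)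
  finally show "\<bar>gs z\<bar> \<le> real m" by simp
qed

lemma U01_integrable:
  fixes f :: "real \<Rightarrow> real"
  assumes "f \<in> borel_measurable U01" "\<And>z. z \<in> space U01 \<Longrightarrow> \<bar>f z\<bar> \<le> B"
  shows "integrable U01 f"
proof -
  interpret U: prob_space U01 by (rule prob_space_U01)
  show ?thesis by (rule U.integrable_const_bound[where B=B]) (use assms in auto)
qed

lemma tr_tr_integrable: "a \<in> {1..m} \<Longrightarrow> b \<in> {1..m} \<Longrightarrow> integrable U01 (\<lambda>z. tr a z * tr b z)"
  by (rule U01_integrable[where B=1]) (erule (1) tr_tr_meas, erule (2) tr_tr_abs)

lemma gs_integral: "(\<integral>z. gs z \<partial>U01) = real m * tt"
proof -
  have "(\<integral>z. gs z \<partial>U01) = (\<Sum>a=1..m. \<integral>z. tr a z \<partial>U01)"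
    unfolding gs_def
    by (rule Bochner_Integration.integral_sum)
       (rule U01_integrable[where B=1], erule tr_meas, erule (1) tr_abs)
  also have "\<dots> = (\<Sum>a=1..m. tt)" by (intro sum.cong refl tr_integral) simp
  finally show ?thesis by simp
qed

lemma gs_sq_integral: "(\<integral>z. (gs z)\<^sup>2 \<partial>U01) = Qs"
proof -
  have "(\<integral>z. (gs z)\<^sup>2 \<partial>U01) = (\<integral>z. (\<Sum>a=1..m. \<Sum>b=1..m. tr a z * tr b z) \<partial>U01)"
    unfolding gs_def power2_eq_square sum_product by simp
  also have "\<dots> = (\<Sum>a=1..m. \<integral>z. (\<Sum>b=1..m. tr a z * tr b z) \<partial>U01)"
    by (rule Bochner_Integration.integral_sum) (intro Bochner_Integration.integrable_sum tr_tr_integrable, auto)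
  also have "\<dots> = (\<Sum>a=1..m. \<Sum>b=1..m. \<integral>z. tr a z * tr b z \<partial>U01)"
    by (intro sum.cong refl Bochner_Integration.integral_sum tr_tr_integrable) auto
  finally show ?thesis unfolding Qs_def q_def .
qed

lemma Qs_var: "Qs - (real m * tt)\<^sup>2 = (\<integral>z. (gs z - real m * tt)\<^sup>2 \<partial>U01)"
proof -
  interpret U: prob_space U01 by (rule prob_space_U01)
  have ig: "integrable U01 gs" by (rule U01_integrable[OF gs_meas gs_bound])
  have ig2: "integrable U01 (\<lambda>z. (gs z)\<^sup>2)"
  proof (rule U01_integrable[where B="real m * real m"])
    show "(\<lambda>z. (gs z)\<^sup>2) \<in> borel_measurable U01" using gs_meas by simp
    fix z assume z: "z \<in> space U01"
    have "\<bar>(gs z)\<^sup>2\<bar> = \<bar>gs z\<bar> * \<bar>gs z\<bar>" by (simp add: power2_eq_square abs_mult)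
    also have "\<dots> \<le> real m * real m" using gs_bound[OF z] by (intro mult_mono) auto
    finally show "\<bar>(gs z)\<^sup>2\<bar> \<le> real m * real m" .
  qed
  have "\<And>z. (gs z - real m * tt)\<^sup>2 = (gs z)\<^sup>2 - 2 * (real m * tt) * gs z + (real m * tt)\<^sup>2"
    by (simp add: power2_diff)
  then have "(\<integral>z. (gs z - real m * tt)\<^sup>2 \<partial>U01)
      = (\<integral>z. (gs z)\<^sup>2 - 2 * (real m * tt) * gs z + (real m * tt)\<^sup>2 \<partial>U01)" by simp
  also have "\<dots> = (\<integral>z. (gs z)\<^sup>2 \<partial>U01) - 2 * (real m * tt) * (\<integral>z. gs z \<partial>U01) + (real m * tt)\<^sup>2"
  proof -
    have p1: "measure U01 {0..1} = 1" using U.prob_space by simp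
    show ?thesis using ig ig2 by (simp add: p1)
  qed
  also have "\<dots> = Qs - (real m * tt)\<^sup>2"
    unfolding gs_sq_integral gs_integral by (simp add: power2_eq_square)
  finally show ?thesis by simp
qed

lemma F_regular_iff: "m \<ge> 1 \<Longrightarrow> F_regular m E (W k) \<longleftrightarrow> (AE z in U01. gs z = real m * tt)"
  unfolding F_regular_def gs_def by (intro AE_cong) (auto simp: field_simps)

lemma regular_Qs: "m \<ge> 1 \<Longrightarrow> F_regular m E (W k) \<Longrightarrow> Qs = (real m * tt)\<^sup>2"
proof -
  assume m: "m \<ge> 1" and r: "F_regular m E (W k)"
  have "AE z in U01. (gs z - real m * tt)\<^sup>2 = 0" using r F_regular_iff[OF m] by (auto elim: AE_mp)
  then have "(\<integral>z. (gs z - real m * tt)\<^sup>2 \<partial>U01) = (\<integral>z. 0 \<partial>U01)" by (rule integral_cong_AE[rotated 2]) (use gs_meas in simp_all)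
  then show ?thesis using Qs_var by simp
qed

lemma irregular_Qs: "m \<ge> 1 \<Longrightarrow> \<not> F_regular m E (W k) \<Longrightarrow> Qs > (real m * tt)\<^sup>2"
proof -
  assume m: "m \<ge> 1" and r: "\<not> F_regular m E (W k)"
  have ig2: "integrable U01 (\<lambda>z. (gs z - real m * tt)\<^sup>2)"
    by (rule U01_integrable[where B="(real m + \<bar>real m * tt\<bar>)\<^sup>2"])
       (use gs_meas in simp, use gs_bound in \<open>auto simp: abs_le_square_iff[symmetric] intro: order_trans[OF abs_triangle_ineq4]\<close>)
  have "(\<integral>z. (gs z - real m * tt)\<^sup>2 \<partial>U01) \<noteq> 0"
  proof
    assume "(\<integral>z. (gs z - real m * tt)\<^sup>2 \<partial>U01) = 0"
    then have "AE z in U01. (gs z - real m * tt)\<^sup>2 = 0"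
      using integral_nonneg_eq_0_iff_AE[OF ig2] by simp
    then have "AE z in U01. gs z = real m * tt" by (auto elim: AE_mp)
    then show False using r F_regular_iff[OF m] by simp
  qed
  moreover have "(\<integral>z. (gs z - real m * tt)\<^sup>2 \<partial>U01) \<ge> 0" by simp
  ultimately show ?thesis using Qs_var by linarith
qed

end


context MF begin

definition Xs :: "nat \<Rightarrow> 'a \<Rightarrow> real" where
  "Xs n \<omega> = Hc n \<omega> / real n ^ m"

definition Dj :: "nat \<Rightarrow> real" where
  "Dj n = real n ^ (m - 1) * real n ^ (m - 1) * real n"

definition Ys :: "nat \<Rightarrow> 'a \<Rightarrow> real" where
  "Ys n \<omega> = S2 n \<omega> / Dj n"

definition rho :: "nat \<Rightarrow> real" where
  "rho n = real (card (inj_maps m n)) / real n ^ m"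

definition EYn :: "nat \<Rightarrow> real" where
  "EYn n = (\<Sum>\<alpha>\<in>J2 n. Iw n (Pf2 \<alpha>)) / Dj n"

lemma Dj_eq: "m \<ge> 1 \<Longrightarrow> Dj n = real n ^ m * real n ^ (m - 1)"
  unfolding Dj_def by (cases m) (simp_all add: algebra_simps)

lemma sigma2_eq:
  assumes \<omega>: "\<omega> \<in> space M"
  shows "sigma2 m E n (layer_adj n A k \<omega>)
     = (1 / real (card (aut m E)) ^ 2) * (Ys n \<omega> - real m ^ 2 * (Hc n \<omega> / real (card (inj_maps m n))) ^ 2)"
  unfolding sigma2_def join_eq[OF \<omega>] t_hat_eq[OF \<omega>] Ys_def Dj_def by simp

lemma Hc_bounds: "\<omega> \<in> space M \<Longrightarrow> 0 \<le> Hc n \<omega> \<and> Hc n \<omega> \<le> real (card (inj_maps m n))"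
proof -
  have "Hc n \<omega> \<le> (\<Sum>f\<in>inj_maps m n. 1)" unfolding Hc_def by (intro sum_mono) (simp add: indicator_def)
  moreover have "0 \<le> Hc n \<omega>" unfolding Hc_def by (intro sum_nonneg) simp
  ultimately show ?thesis by simp
qed

lemma rho_bounds:
  assumes n: "n \<ge> 1"
  shows "1 - real (m * m) / real n \<le> rho n" "rho n \<le> 1" "0 \<le> rho n"
proof -
  have np: "real n ^ m > 0" using n by simp
  show "rho n \<le> 1" unfolding rho_def using inj_card_upper[of m n] np
    by (simp add: divide_le_eq_1)
  show "0 \<le> rho n" unfolding rho_def by simp
  have "real n ^ m - real (m * m) * real n ^ (m - 1) \<le> real (card (inj_maps m n))" by (rule inj_card_lower)
  then have "(real n ^ m - real (m * m) * real n ^ (m - 1)) / real n ^ m \<le> rho n"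
    unfolding rho_def using np by (intro divide_right_mono) auto
  moreover have "(real n ^ m - real (m * m) * real n ^ (m - 1)) / real n ^ m = 1 - real (m * m) / real n"
  proof (cases m)
    case 0 then show ?thesis by simp
  next
    case (Suc j)
    then show ?thesis using n by (simp add: field_simps)
  qed
  ultimately show "1 - real (m * m) / real n \<le> rho n" by simp
qed

lemma Xs_integrable: "integrable M (Xs n)"
  unfolding Xs_def by (intro integrable_divide Hc_integrable)

lemma E_Xs: "(\<integral>\<omega>. Xs n \<omega> \<partial>M) = rho n * tt"
  unfolding Xs_def rho_def using E_Hc by simp

lemma Xs_bounds: "\<omega> \<in> space M \<Longrightarrow> n \<ge> 1 \<Longrightarrow> 0 \<le> Xs n \<omega> \<and> Xs n \<omega> \<le> 1"
proof -
  assume \<omega>: "\<omega> \<in> space M" and n: "n \<ge> 1"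
  have "Hc n \<omega> \<le> real n ^ m"
  proof -
    have c: "real (card (inj_maps m n)) \<le> real (n ^ m)" using inj_card_upper[of m n] by (simp only: of_nat_le_iff)
    have c': "real (card (inj_maps m n)) \<le> real n ^ m" using c by (simp only: of_nat_power)
    show ?thesis using c' Hc_bounds[OF \<omega>, of n] by linarith
  qed
  then show ?thesis using Hc_bounds[OF \<omega>, of n] n unfolding Xs_def by simp
qed

lemma Xs_sq_integrable: "n \<ge> 1 \<Longrightarrow> integrable M (\<lambda>\<omega>. (Xs n \<omega>)\<^sup>2)"
proof -
  assume n: "n \<ge> 1"
  have m: "(\<lambda>\<omega>. (Xs n \<omega>)\<^sup>2) \<in> borel_measurable M" using Xs_integrable by simp
  show ?thesis
    by (rule integrable_const_bound[where B=1]) (use m Xs_bounds[OF _ n] in \<open>auto simp: abs_square_le_1\<close>)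
qed

lemma E_Xs_sq: "n \<ge> 1 \<Longrightarrow> (\<integral>\<omega>. (Xs n \<omega>)\<^sup>2 \<partial>M) \<ge> (rho n * tt)\<^sup>2"
proof -
  assume n: "n \<ge> 1"
  define \<mu> where "\<mu> = rho n * tt"
  have i1: "integrable M (Xs n)" by (rule Xs_integrable)
  have i2: "integrable M (\<lambda>\<omega>. (Xs n \<omega>)\<^sup>2)" by (rule Xs_sq_integrable[OF n])
  have "0 \<le> (\<integral>\<omega>. (Xs n \<omega> - \<mu>)\<^sup>2 \<partial>M)" by simp
  also have "(\<integral>\<omega>. (Xs n \<omega> - \<mu>)\<^sup>2 \<partial>M) = (\<integral>\<omega>. (Xs n \<omega>)\<^sup>2 - 2 * \<mu> * Xs n \<omega> + \<mu>\<^sup>2 \<partial>M)"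
  proof -
    have "\<And>\<omega>. (Xs n \<omega> - \<mu>)\<^sup>2 = (Xs n \<omega>)\<^sup>2 - 2 * \<mu> * Xs n \<omega> + \<mu>\<^sup>2"
      by (simp add: power2_diff algebra_simps)
    then show ?thesis by (simp only:)
  qed
  also have "\<dots> = (\<integral>\<omega>. (Xs n \<omega>)\<^sup>2 \<partial>M) - 2 * \<mu> * (\<integral>\<omega>. Xs n \<omega> \<partial>M) + \<mu>\<^sup>2"
    using i1 i2 by (simp add: prob_space)
  also have "\<dots> = (\<integral>\<omega>. (Xs n \<omega>)\<^sup>2 \<partial>M) - \<mu>\<^sup>2"
    unfolding E_Xs \<mu>_def by (simp add: power2_eq_square)
  finally show ?thesis unfolding \<mu>_def by simp
qed

lemma E_S2_J2: "(\<integral>\<omega>. S2 n \<omega> \<partial>M) = (\<Sum>\<alpha>\<in>J2 n. Iw n (Pf2 \<alpha>))"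
proof -
  have "(\<integral>\<omega>. S2 n \<omega> \<partial>M) = (\<Sum>\<alpha>\<in>J2 n. \<integral>\<omega>. indicator (Ev n (Pf2 \<alpha>)) \<omega> \<partial>M)"
    unfolding S2_J2 by (rule Bochner_Integration.integral_sum) (intro ind_Ev_integrable finite_sub_pairs Pf2_pairs)
  also have "\<dots> = (\<Sum>\<alpha>\<in>J2 n. Iw n (Pf2 \<alpha>))"
    by (intro sum.cong refl ind_Ev_integral Pf2_pairs)
  finally show ?thesis .
qed

lemma Ys_integrable: "integrable M (Ys n)"
  unfolding Ys_def by (intro integrable_divide S2_integrable)

lemma E_Ys: "(\<integral>\<omega>. Ys n \<omega> \<partial>M) = EYn n"
  unfolding Ys_def EYn_def using E_S2_J2 by simp

lemma EYn_bound:
  assumes n: "n \<ge> 1" and m: "m \<ge> 1"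
  shows "\<bar>EYn n - Qs\<bar> \<le> 3 * real m ^ 4 / real n"
proof -
  define X where "X = real n ^ (m - 1) * real n ^ (m - 1)"
  define ES where "ES = (\<integral>\<omega>. S2 n \<omega> \<partial>M)"
  have Xpos: "X > 0" unfolding X_def using n by simp
  have DX: "Dj n = X * real n" unfolding Dj_def X_def by simp
  have Dpos: "Dj n > 0" unfolding DX using Xpos n by simp
  have b: "\<bar>ES - Dj n * Qs\<bar> \<le> 3 * real m ^ 4 * X"
    using ES2_bound[of n] Dj_eq[OF m] unfolding ES_def X_def by (simp add: power4_eq_xxxx mult.assoc)
  have "EYn n - Qs = (ES - Dj n * Qs) / Dj n"
    unfolding EYn_def ES_def E_S2_J2 using Dpos by (simp add: diff_divide_distrib)
  then have "\<bar>EYn n - Qs\<bar> = \<bar>ES - Dj n * Qs\<bar> / Dj n" using Dpos by simp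
  also have "\<dots> \<le> 3 * real m ^ 4 * X / Dj n" using Dpos by (intro divide_right_mono b) simp
  also have "\<dots> = 3 * real m ^ 4 / real n" unfolding DX using Xpos by simp
  finally show ?thesis .
qed

lemma CS_Ys:
  assumes \<omega>: "\<omega> \<in> space M" and n: "n \<ge> 1" and m: "m \<ge> 1"
  shows "Ys n \<omega> \<ge> real m ^ 2 * (Xs n \<omega>) ^ 2"
  using CS_join[OF \<omega> n m] join_eq[OF \<omega>] unfolding Ys_def Dj_def Xs_def by simp

end


context MF begin

lemma conc_X:
  assumes n: "n \<ge> 1" and m: "m \<ge> 1" and \<delta>: "\<delta> > 0"
  shows "prob {\<omega> \<in> space M. \<delta> \<le> \<bar>Xs n \<omega> - rho n * tt\<bar>} \<le> real m ^ 2 / (real n * \<delta>\<^sup>2)"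
proof -
  have R: "real n \<ge> 1" using n by simp
  have Dp: "real n ^ m > 0" using n by simp
  have sumIw: "(\<Sum>f\<in>inj_maps m n. Iw n (PE f)) = real (card (inj_maps m n)) * tt"
    using Iw_PE by simp
  have seteq: "{\<omega> \<in> space M. \<delta> \<le> \<bar>Xs n \<omega> - rho n * tt\<bar>}
     = {\<omega> \<in> space M. \<delta> \<le> \<bar>(\<Sum>f\<in>inj_maps m n. indicator (Ev n (PE f)) \<omega>) / real n ^ m
                         - (\<Sum>f\<in>inj_maps m n. Iw n (PE f)) / real n ^ m\<bar>}"
    unfolding Xs_def Hc_def rho_def sumIw by simp
  have "prob {\<omega> \<in> space M. \<delta> \<le> \<bar>Xs n \<omega> - rho n * tt\<bar>}
      \<le> real (card {p \<in> inj_maps m n \<times> inj_maps m n. verts (PE (fst p)) \<inter> verts (PE (snd p)) \<noteq> {}}) / (real n ^ m * \<delta>)\<^sup>2"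
    unfolding seteq by (rule conc[OF finite_inj_maps emap_pairs \<delta> Dp])
  also have "\<dots> \<le> (real n * ((real m * real n ^ (m - 1)) * (real m * real n ^ (m - 1)))) / (real n ^ m * \<delta>)\<^sup>2"
  proof (rule divide_right_mono)
    have "real (card {p \<in> inj_maps m n \<times> inj_maps m n. verts (PE (fst p)) \<inter> verts (PE (snd p)) \<noteq> {}})
        \<le> real (n * ((m * n ^ (m - 1)) * (m * n ^ (m - 1))))"
      by (simp only: of_nat_le_iff) (rule Hc_bad)
    then show "real (card {p \<in> inj_maps m n \<times> inj_maps m n. verts (PE (fst p)) \<inter> verts (PE (snd p)) \<noteq> {}})
        \<le> real n * ((real m * real n ^ (m - 1)) * (real m * real n ^ (m - 1)))" by simp
  qed simp
  also have "\<dots> = real m ^ 2 / (real n * \<delta>\<^sup>2)"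
  proof -
    obtain j where j: "m = Suc j" using m by (cases m) auto
    show ?thesis unfolding j using R \<delta> by (simp add: field_simps power2_eq_square)
  qed
  finally show ?thesis .
qed

lemma conc_Y:
  assumes n: "n \<ge> 1" and m: "m \<ge> 1" and \<delta>: "\<delta> > 0"
  shows "prob {\<omega> \<in> space M. \<delta> \<le> \<bar>Ys n \<omega> - EYn n\<bar>} \<le> 4 * real m ^ 6 / (real n * \<delta>\<^sup>2)"
proof -
  define R where "R = real n"
  define X where "X = R ^ (m - 1) * R ^ (m - 1)"
  have R: "R \<ge> 1" unfolding R_def using n by simp
  have Xp: "X > 0" unfolding X_def using R by simp
  have DX: "Dj n = X * R" unfolding Dj_def X_def R_def by simp
  have Dp: "Dj n > 0" unfolding DX using Xp R by simp
  have seteq: "{\<omega> \<in> space M. \<delta> \<le> \<bar>Ys n \<omega> - EYn n\<bar>}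
     = {\<omega> \<in> space M. \<delta> \<le> \<bar>(\<Sum>\<alpha>\<in>J2 n. indicator (Ev n (Pf2 \<alpha>)) \<omega>) / Dj n
                         - (\<Sum>\<alpha>\<in>J2 n. Iw n (Pf2 \<alpha>)) / Dj n\<bar>}"
    unfolding Ys_def EYn_def S2_J2 by simp
  have "prob {\<omega> \<in> space M. \<delta> \<le> \<bar>Ys n \<omega> - EYn n\<bar>}
      \<le> real (card {p \<in> J2 n \<times> J2 n. verts (Pf2 (fst p)) \<inter> verts (Pf2 (snd p)) \<noteq> {}}) / (Dj n * \<delta>)\<^sup>2"
    unfolding seteq by (rule conc[OF finite_J2 Pf2_pairs \<delta> Dp])
  also have "\<dots> \<le> (R * ((2 * real m ^ 3 * X) * (2 * real m ^ 3 * X))) / (Dj n * \<delta>)\<^sup>2"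
  proof (rule divide_right_mono)
    have "real (card {p \<in> J2 n \<times> J2 n. verts (Pf2 (fst p)) \<inter> verts (Pf2 (snd p)) \<noteq> {}})
        \<le> real (n * ((m * m * (2 * (m * n ^ (m - 1) * n ^ (m - 1)))) * (m * m * (2 * (m * n ^ (m - 1) * n ^ (m - 1))))))"
      by (simp only: of_nat_le_iff) (rule S2_bad)
    also have "\<dots> = R * ((2 * real m ^ 3 * X) * (2 * real m ^ 3 * X))"
      unfolding R_def X_def by (simp add: power3_eq_cube algebra_simps)
    finally show "real (card {p \<in> J2 n \<times> J2 n. verts (Pf2 (fst p)) \<inter> verts (Pf2 (snd p)) \<noteq> {}})
        \<le> R * ((2 * real m ^ 3 * X) * (2 * real m ^ 3 * X))" .
  qed simp
  also have "\<dots> = 4 * real m ^ 6 / (R * \<delta>\<^sup>2)"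
    unfolding DX using Xp R \<delta> by (simp add: field_simps power2_eq_square)
  finally show ?thesis unfolding R_def .
qed

end


lemma aut_card: "card (aut m E) \<ge> 1"
proof -
  have "aut m E \<subseteq> {p. p permutes {1..m}}" unfolding aut_def by auto
  then have fin: "finite (aut m E)" by (rule finite_subset) (rule finite_permutations, simp)
  have "id \<in> aut m E" unfolding aut_def by (auto simp: permutes_id)
  then have "aut m E \<noteq> {}" by auto
  then show ?thesis using fin by (simp add: Suc_le_eq card_gt_0_iff)
qed

lemma ev_real_ge: "eventually (\<lambda>n. X \<le> real n) sequentially"
  using filterlim_real_sequentially unfolding filterlim_at_top by blast

lemma ev_sqrt_ge: "eventually (\<lambda>n. X \<le> sqrt (real n)) sequentially"
proof -
  have "eventually (\<lambda>n. X\<^sup>2 \<le> real n) sequentially" by (rule ev_real_ge)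
  then show ?thesis
  proof (rule eventually_mono)
    fix n assume "X\<^sup>2 \<le> real n"
    then have "sqrt (X\<^sup>2) \<le> sqrt (real n)" by (rule real_sqrt_le_mono)
    then show "X \<le> sqrt (real n)" by (metis real_sqrt_abs abs_ge_self order_trans)
  qed
qed

lemma lim_c_sqrt: "(\<lambda>n. c / sqrt (real n)) \<longlonglongrightarrow> 0"
proof (rule tendsto_divide_0[OF tendsto_const])
  show "filterlim (\<lambda>n. sqrt (real n)) at_infinity sequentially"
    by (rule filterlim_at_top_imp_at_infinity, rule filterlim_compose[OF sqrt_at_top filterlim_real_sequentially])
qed

lemma lim_c_n: "(\<lambda>n. c / real n) \<longlonglongrightarrow> 0"
proof (rule tendsto_divide_0[OF tendsto_const])
  show "filterlim (\<lambda>n. real n) at_infinity sequentially"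
    by (rule filterlim_at_top_imp_at_infinity, rule filterlim_real_sequentially)
qed

lemma sandwich0:
  fixes f g :: "nat \<Rightarrow> real"
  assumes "g \<longlonglongrightarrow> 0" "eventually (\<lambda>n. f n \<le> g n) sequentially" "\<And>n. 0 \<le> f n"
  shows "f \<longlonglongrightarrow> 0"
  by (rule tendsto_sandwich[OF _ assms(2) tendsto_const assms(1)]) (use assms(3) in simp)

context MF begin

lemma tt_bounds: "0 \<le> tt \<and> tt \<le> 1"
  unfolding hom_density_eq by (rule int01[OF prob_space_PiU]) (rule prodW_E_bounds)

lemma that_facts:
  assumes \<omega>: "\<omega> \<in> space M" and n: "n \<ge> 1"
  shows "0 \<le> Hc n \<omega> / real (card (inj_maps m n))" "Hc n \<omega> / real (card (inj_maps m n)) \<le> 1"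
    "Xs n \<omega> = Hc n \<omega> / real (card (inj_maps m n)) * rho n"
proof -
  note hb = Hc_bounds[OF \<omega>, of n]
  show "0 \<le> Hc n \<omega> / real (card (inj_maps m n))" using hb by simp
  show "Hc n \<omega> / real (card (inj_maps m n)) \<le> 1"
  proof (cases "card (inj_maps m n) = 0")
    case True then show ?thesis by simp
  next
    case False then show ?thesis using hb by (simp add: divide_le_eq_1)
  qed
  show "Xs n \<omega> = Hc n \<omega> / real (card (inj_maps m n)) * rho n"
  proof (cases "card (inj_maps m n) = 0")
    case True
    then have "inj_maps m n = {}" using finite_inj_maps by simp
    then show ?thesis unfolding Xs_def Hc_def rho_def by simp
  next
    case False then show ?thesis unfolding Xs_def rho_def by simp
  qed
qed

lemma sq_diff_bound:
  assumes n: "n \<ge> 1" and h0: "0 \<le> h" and h1: "h \<le> 1"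
  shows "\<bar>(h * rho n)\<^sup>2 - h\<^sup>2\<bar> \<le> 2 * real (m * m) / real n"
proof -
  note rb = rho_bounds[OF n]
  have "\<bar>(h * rho n)\<^sup>2 - h\<^sup>2\<bar> = h\<^sup>2 * (1 - (rho n)\<^sup>2)"
  proof -
    have r1: "(rho n)\<^sup>2 \<le> 1" using rb by (simp add: abs_square_le_1)
    have e: "(h * rho n)\<^sup>2 - h\<^sup>2 = - (h\<^sup>2 * (1 - (rho n)\<^sup>2))" by (simp add: power_mult_distrib algebra_simps)
    have "0 \<le> h\<^sup>2 * (1 - (rho n)\<^sup>2)" using r1 by simp
    then show ?thesis unfolding e by simp
  qed
  also have "\<dots> \<le> 1 * (1 - (rho n)\<^sup>2)"
    using h0 h1 rb by (intro mult_right_mono) (auto simp: abs_square_le_1 power_le_one)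
  also have "\<dots> \<le> 2 * (1 - rho n)"
  proof -
    have "1 - (rho n)\<^sup>2 = (1 - rho n) * (1 + rho n)" by (simp add: power2_eq_square algebra_simps)
    also have "\<dots> \<le> (1 - rho n) * 2" using rb by (intro mult_left_mono) auto
    finally show ?thesis by simp
  qed
  also have "\<dots> \<le> 2 * real (m * m) / real n" using rb by simp
  finally show ?thesis .
qed

end


context MF begin

abbreviation Au :: real where "Au \<equiv> real (card (aut m E)) ^ 2"

lemma Au_ge1: "Au \<ge> 1"
  using aut_card[of m E] by simp

lemma Dl_nonneg: "\<omega> \<in> space M \<Longrightarrow> n \<ge> 1 \<Longrightarrow> m \<ge> 1 \<Longrightarrow> 0 \<le> Ys n \<omega> - real m ^ 2 * (Xs n \<omega>)\<^sup>2"
  using CS_Ys by simp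

lemma core_bound:
  assumes \<omega>: "\<omega> \<in> space M" and n: "n \<ge> 1"
  shows "\<bar>(Ys n \<omega> - real m ^ 2 * (Hc n \<omega> / real (card (inj_maps m n))) ^ 2) - (Ys n \<omega> - real m ^ 2 * (Xs n \<omega>)\<^sup>2)\<bar>
     \<le> 2 * real m ^ 4 / real n"
proof -
  define h where "h = Hc n \<omega> / real (card (inj_maps m n))"
  note tf = that_facts[OF \<omega> n]
  have xs: "Xs n \<omega> = h * rho n" using tf(3) unfolding h_def by simp
  have e: "(Ys n \<omega> - real m ^ 2 * h ^ 2) - (Ys n \<omega> - real m ^ 2 * (Xs n \<omega>)\<^sup>2) = real m ^ 2 * ((h * rho n)\<^sup>2 - h\<^sup>2)"
    unfolding xs by (simp add: algebra_simps)
  have "\<bar>(Ys n \<omega> - real m ^ 2 * h ^ 2) - (Ys n \<omega> - real m ^ 2 * (Xs n \<omega>)\<^sup>2)\<bar>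
      = real m ^ 2 * \<bar>(h * rho n)\<^sup>2 - h\<^sup>2\<bar>"
    unfolding e by (simp add: abs_mult)
  also have "\<dots> \<le> real m ^ 2 * (2 * real (m * m) / real n)"
    using tf(1,2) unfolding h_def by (intro mult_left_mono sq_diff_bound[OF n]) auto
  also have "\<dots> = 2 * real m ^ 4 / real n" by (simp add: power4_eq_xxxx power2_eq_square)
  finally show ?thesis unfolding h_def .
qed

lemma sigma_scaled:
  assumes \<omega>: "\<omega> \<in> space M"
  shows "Au * sigma2 m E n (layer_adj n A k \<omega>) = Ys n \<omega> - real m ^ 2 * (Hc n \<omega> / real (card (inj_maps m n))) ^ 2"
proof -
  have "card (aut m E) \<noteq> 0" using aut_card[of m E] by linarith
  then show ?thesis using sigma2_eq[OF \<omega>, of n] by simp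
qed

lemma Dl_integrable: "n \<ge> 1 \<Longrightarrow> integrable M (\<lambda>\<omega>. Ys n \<omega> - real m ^ 2 * (Xs n \<omega>)\<^sup>2)"
  by (intro Bochner_Integration.integrable_diff Ys_integrable integrable_mult_right Xs_sq_integrable)

lemma E_Dl_regular:
  assumes n: "n \<ge> 1" and m: "m \<ge> 1" and reg: "F_regular m E (W k)"
  shows "(\<integral>\<omega>. Ys n \<omega> - real m ^ 2 * (Xs n \<omega>)\<^sup>2 \<partial>M) \<le> 5 * real m ^ 4 / real n"
proof -
  have "(\<integral>\<omega>. Ys n \<omega> - real m ^ 2 * (Xs n \<omega>)\<^sup>2 \<partial>M) = EYn n - real m ^ 2 * (\<integral>\<omega>. (Xs n \<omega>)\<^sup>2 \<partial>M)"
    using Ys_integrable Xs_sq_integrable[OF n] E_Ys by simp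
  also have "\<dots> \<le> EYn n - real m ^ 2 * (rho n * tt)\<^sup>2"
    using E_Xs_sq[OF n] by (intro diff_left_mono mult_left_mono) auto
  also have "\<dots> \<le> (Qs + 3 * real m ^ 4 / real n) - real m ^ 2 * (rho n * tt)\<^sup>2"
    using EYn_bound[OF n m] by linarith
  also have "\<dots> = real m ^ 2 * (tt\<^sup>2 - (tt * rho n)\<^sup>2) + 3 * real m ^ 4 / real n"
    using regular_Qs[OF m reg] by (simp add: power_mult_distrib algebra_simps)
  also have "\<dots> \<le> real m ^ 2 * (2 * real (m * m) / real n) + 3 * real m ^ 4 / real n"
  proof -
    have "tt\<^sup>2 - (tt * rho n)\<^sup>2 \<le> \<bar>(tt * rho n)\<^sup>2 - tt\<^sup>2\<bar>" by linarith
    also have "\<dots> \<le> 2 * real (m * m) / real n" using tt_bounds by (intro sq_diff_bound[OF n]) auto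
    finally show ?thesis by (intro add_right_mono mult_left_mono) auto
  qed
  also have "\<dots> = 5 * real m ^ 4 / real n" by (simp add: power4_eq_xxxx power2_eq_square field_simps)
  finally show ?thesis .
qed

end


context MF begin

lemma part1:
  assumes m: "m \<ge> 1" and reg: "F_regular m E (W k)" and \<epsilon>: "\<epsilon> > 0"
  shows "(\<lambda>n. measure M {\<omega> \<in> space M. \<bar>sqrt (real n) * sigma2 m E n (layer_adj n A k \<omega>)\<bar> > \<epsilon>}) \<longlonglongrightarrow> 0"
proof (rule sandwich0[OF lim_c_sqrt[of "10 * real m ^ 4 / \<epsilon>"]])
  show "\<And>n. 0 \<le> measure M {\<omega> \<in> space M. \<bar>sqrt (real n) * sigma2 m E n (layer_adj n A k \<omega>)\<bar> > \<epsilon>}" by simp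
  have ev: "eventually (\<lambda>n. 1 \<le> n \<and> 4 * real m ^ 4 / \<epsilon> \<le> sqrt (real n)) sequentially"
    using eventually_ge_at_top[of 1] ev_sqrt_ge[of "4 * real m ^ 4 / \<epsilon>"] by (rule eventually_conj)
  show "eventually (\<lambda>n. measure M {\<omega> \<in> space M. \<bar>sqrt (real n) * sigma2 m E n (layer_adj n A k \<omega>)\<bar> > \<epsilon>}
      \<le> 10 * real m ^ 4 / \<epsilon> / sqrt (real n)) sequentially"
  proof (rule eventually_mono[OF ev], elim conjE)
    fix n :: nat assume n: "1 \<le> n" and big: "4 * real m ^ 4 / \<epsilon> \<le> sqrt (real n)"
    define s where "s = sqrt (real n)"
    have s: "s > 0" "s * s = real n" unfolding s_def using n by auto
    define Dl where "Dl \<omega> = Ys n \<omega> - real m ^ 2 * (Xs n \<omega>)\<^sup>2" for \<omega>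
    have Dli: "integrable M Dl" unfolding Dl_def by (rule Dl_integrable[OF n])
    have Dlm[measurable]: "Dl \<in> borel_measurable M" using Dli by auto
    have c: "\<epsilon> / (2 * s) > 0" using \<epsilon> s by simp
    have sub: "{\<omega> \<in> space M. \<bar>sqrt (real n) * sigma2 m E n (layer_adj n A k \<omega>)\<bar> > \<epsilon>}
        \<subseteq> {\<omega> \<in> space M. \<epsilon> / (2 * s) \<le> Dl \<omega>}"
    proof (rule subsetI)
      fix \<omega> assume "\<omega> \<in> {\<omega> \<in> space M. \<bar>sqrt (real n) * sigma2 m E n (layer_adj n A k \<omega>)\<bar> > \<epsilon>}"
      then have \<omega>: "\<omega> \<in> space M" and h: "\<epsilon> < s * \<bar>sigma2 m E n (layer_adj n A k \<omega>)\<bar>"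
        unfolding s_def by (auto simp: abs_mult)
      have Dl0: "0 \<le> Dl \<omega>" unfolding Dl_def using Dl_nonneg[OF \<omega> n m] .
      have "\<bar>Au * sigma2 m E n (layer_adj n A k \<omega>)\<bar> \<le> Dl \<omega> + 2 * real m ^ 4 / real n"
        using sigma_scaled[OF \<omega>, of n] core_bound[OF \<omega> n] Dl0 unfolding Dl_def by linarith
      moreover have "\<bar>sigma2 m E n (layer_adj n A k \<omega>)\<bar> \<le> \<bar>Au * sigma2 m E n (layer_adj n A k \<omega>)\<bar>"
        using Au_ge1 by (simp add: abs_mult mult_le_cancel_right1)
      ultimately have "\<bar>sigma2 m E n (layer_adj n A k \<omega>)\<bar> \<le> Dl \<omega> + 2 * real m ^ 4 / real n" by linarith
      then have "s * \<bar>sigma2 m E n (layer_adj n A k \<omega>)\<bar> \<le> s * (Dl \<omega> + 2 * real m ^ 4 / real n)"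
        using s by (intro mult_left_mono) auto
      also have "\<dots> = s * Dl \<omega> + s * (2 * real m ^ 4 / real n)" by (rule distrib_left)
      also have "s * (2 * real m ^ 4 / real n) = 2 * real m ^ 4 / s"
        using s by (simp add: field_simps flip: s(2))
      also have "2 * real m ^ 4 / s \<le> \<epsilon> / 2"
        using big s \<epsilon> unfolding s_def[symmetric] by (simp add: field_simps)
      finally have "\<epsilon> / 2 < s * Dl \<omega>" using h by linarith
      then have "\<epsilon> / (2 * s) \<le> Dl \<omega>" using s by (simp add: field_simps)
      then show "\<omega> \<in> {\<omega> \<in> space M. \<epsilon> / (2 * s) \<le> Dl \<omega>}" using \<omega> by simp
    qed
    have sets: "{\<omega> \<in> space M. \<epsilon> / (2 * s) \<le> Dl \<omega>} \<in> sets M" by measurable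
    have "measure M {\<omega> \<in> space M. \<bar>sqrt (real n) * sigma2 m E n (layer_adj n A k \<omega>)\<bar> > \<epsilon>}
        \<le> measure M {\<omega> \<in> space M. \<epsilon> / (2 * s) \<le> Dl \<omega>}"
      by (rule finite_measure_mono[OF sub sets])
    also have "\<dots> \<le> (\<integral>\<omega>. Dl \<omega> \<partial>M) / (\<epsilon> / (2 * s))"
      by (rule integral_Markov_inequality_measure[OF Dli sets _ c]) (use Dl_nonneg[OF _ n m] in \<open>auto simp: Dl_def\<close>)
    also have "\<dots> \<le> (5 * real m ^ 4 / real n) / (\<epsilon> / (2 * s))"
      using E_Dl_regular[OF n m reg] c unfolding Dl_def by (intro divide_right_mono) auto
    also have "\<dots> = 10 * real m ^ 4 / \<epsilon> / s"
      using s \<epsilon> by (simp add: field_simps flip: s(2))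
    finally show "measure M {\<omega> \<in> space M. \<bar>sqrt (real n) * sigma2 m E n (layer_adj n A k \<omega>)\<bar> > \<epsilon>}
      \<le> 10 * real m ^ 4 / \<epsilon> / sqrt (real n)" unfolding s_def .
  qed
qed

end


context MF begin

lemma part2:
  assumes m: "m \<ge> 1" and irr: "\<not> F_regular m E (W k)"
  shows "(\<lambda>n. measure M {\<omega> \<in> space M. sqrt (real n) * sigma2 m E n (layer_adj n A k \<omega>) \<le> C}) \<longlonglongrightarrow> 0"
proof -
  define \<Delta> where "\<Delta> = Qs - (real m * tt)\<^sup>2"
  have \<Delta>: "\<Delta> > 0" unfolding \<Delta>_def using irregular_Qs[OF m irr] by simp
  define \<delta> where "\<delta> = min 1 (\<Delta> / (4 * (1 + 3 * real m ^ 2)))"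
  have \<delta>: "\<delta> > 0" "\<delta> \<le> 1" "\<delta> * (1 + 3 * real m ^ 2) \<le> \<Delta> / 4"
  proof -
    have p: "1 + 3 * real m ^ 2 > 0" by (simp add: add_pos_nonneg)
    have "\<Delta> / (4 * (1 + 3 * real m ^ 2)) > 0" using \<Delta> p by (intro divide_pos_pos) auto
    then show "\<delta> > 0" "\<delta> \<le> 1" unfolding \<delta>_def by auto
    have "\<delta> \<le> \<Delta> / (4 * (1 + 3 * real m ^ 2))" unfolding \<delta>_def by simp
    then have "\<delta> * (1 + 3 * real m ^ 2) \<le> \<Delta> / (4 * (1 + 3 * real m ^ 2)) * (1 + 3 * real m ^ 2)"
      using p by (intro mult_right_mono) auto
    also have "\<dots> = \<Delta> / 4" using p by (simp add: field_simps)
    finally show "\<delta> * (1 + 3 * real m ^ 2) \<le> \<Delta> / 4" .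
  qed
  define B where "B = (4 * real m ^ 6 + real m ^ 2) / \<delta>\<^sup>2"
  show ?thesis
  proof (rule sandwich0[OF lim_c_n[of B]])
    show "\<And>n. 0 \<le> measure M {\<omega> \<in> space M. sqrt (real n) * sigma2 m E n (layer_adj n A k \<omega>) \<le> C}" by simp
    have ev: "eventually (\<lambda>n. (1 \<le> n \<and> 20 * real m ^ 4 / \<Delta> \<le> real n) \<and> 2 * Au * \<bar>C\<bar> / \<Delta> + 1 \<le> sqrt (real n)) sequentially"
      by (intro eventually_conj eventually_ge_at_top ev_real_ge ev_sqrt_ge)
    show "eventually (\<lambda>n. measure M {\<omega> \<in> space M. sqrt (real n) * sigma2 m E n (layer_adj n A k \<omega>) \<le> C}
        \<le> B / real n) sequentially"
    proof (rule eventually_mono[OF ev], elim conjE)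
      fix n :: nat assume n: "1 \<le> n" and big1: "20 * real m ^ 4 / \<Delta> \<le> real n"
        and big2: "2 * Au * \<bar>C\<bar> / \<Delta> + 1 \<le> sqrt (real n)"
      have Rp: "real n > 0" using n by simp
      have r5: "5 * real m ^ 4 / real n \<le> \<Delta> / 4"
        using big1 Rp \<Delta> by (simp add: field_simps)
      have Ysm[measurable]: "Ys n \<in> borel_measurable M" using Ys_integrable by auto
      have Xsm[measurable]: "Xs n \<in> borel_measurable M" using Xs_integrable by auto
      define S1 where "S1 = {\<omega> \<in> space M. \<delta> \<le> \<bar>Ys n \<omega> - EYn n\<bar>}"
      define S2' where "S2' = {\<omega> \<in> space M. \<delta> \<le> \<bar>Xs n \<omega> - rho n * tt\<bar>}"
      have S1s: "S1 \<in> sets M" unfolding S1_def by measurable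
      have S2s: "S2' \<in> sets M" unfolding S2'_def by measurable
      have sub: "{\<omega> \<in> space M. sqrt (real n) * sigma2 m E n (layer_adj n A k \<omega>) \<le> C} \<subseteq> S1 \<union> S2'"
      proof (rule subsetI, rule ccontr)
        fix \<omega> assume h: "\<omega> \<in> {\<omega> \<in> space M. sqrt (real n) * sigma2 m E n (layer_adj n A k \<omega>) \<le> C}"
          and nS: "\<omega> \<notin> S1 \<union> S2'"
        have \<omega>: "\<omega> \<in> space M" and hC: "sqrt (real n) * sigma2 m E n (layer_adj n A k \<omega>) \<le> C" using h by auto
        have y: "\<bar>Ys n \<omega> - EYn n\<bar> < \<delta>" using nS \<omega> unfolding S1_def by auto
        have x: "\<bar>Xs n \<omega> - rho n * tt\<bar> < \<delta>" using nS \<omega> unfolding S2'_def by auto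
        note rb = rho_bounds[OF n] and tb = tt_bounds
        have x0: "0 \<le> Xs n \<omega>" using Xs_bounds[OF \<omega> n] by simp
        have xu: "Xs n \<omega> \<le> tt + \<delta>"
        proof -
          have "rho n * tt \<le> 1 * tt" using rb tb by (intro mult_right_mono) auto
          then show ?thesis using x by linarith
        qed
        have xsq: "(Xs n \<omega>)\<^sup>2 \<le> tt\<^sup>2 + 3 * \<delta>"
        proof -
          have "(Xs n \<omega>)\<^sup>2 \<le> (tt + \<delta>)\<^sup>2" using x0 xu by (intro power_mono) auto
          also have "\<dots> = tt\<^sup>2 + (2 * tt + \<delta>) * \<delta>" by (simp add: power2_eq_square algebra_simps)
          also have "(2 * tt + \<delta>) * \<delta> \<le> 3 * \<delta>"
          proof -
            have "2 * tt + \<delta> \<le> 3" using tb \<delta> by linarith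
            then show ?thesis using \<delta> by (simp add: mult_right_mono)
          qed
          finally show ?thesis by simp
        qed
        have yl: "Ys n \<omega> \<ge> Qs - 3 * real m ^ 4 / real n - \<delta>"
          using y EYn_bound[OF n m] by linarith
        have cb: "Au * sigma2 m E n (layer_adj n A k \<omega>) \<ge> (Ys n \<omega> - real m ^ 2 * (Xs n \<omega>)\<^sup>2) - 2 * real m ^ 4 / real n"
          using sigma_scaled[OF \<omega>, of n] core_bound[OF \<omega> n] by linarith
        have "real m ^ 2 * (Xs n \<omega>)\<^sup>2 \<le> real m ^ 2 * (tt\<^sup>2 + 3 * \<delta>)"
          using xsq by (intro mult_left_mono) auto
        then have "Au * sigma2 m E n (layer_adj n A k \<omega>)
            \<ge> Qs - 3 * real m ^ 4 / real n - \<delta> - real m ^ 2 * (tt\<^sup>2 + 3 * \<delta>) - 2 * real m ^ 4 / real n"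
          using cb yl by linarith
        moreover have "Qs - 3 * real m ^ 4 / real n - \<delta> - real m ^ 2 * (tt\<^sup>2 + 3 * \<delta>) - 2 * real m ^ 4 / real n
            = \<Delta> - 5 * real m ^ 4 / real n - \<delta> * (1 + 3 * real m ^ 2)"
          unfolding \<Delta>_def by (simp add: power_mult_distrib algebra_simps)
        ultimately have "Au * sigma2 m E n (layer_adj n A k \<omega>) \<ge> \<Delta> / 2"
          using r5 \<delta>(3) by linarith
        then have sg: "sigma2 m E n (layer_adj n A k \<omega>) \<ge> \<Delta> / (2 * Au)"
        proof -
          assume a: "Au * sigma2 m E n (layer_adj n A k \<omega>) \<ge> \<Delta> / 2"
          have Ap: "2 * Au > 0" using Au_ge1 by linarith
          have e: "sigma2 m E n (layer_adj n A k \<omega>) * (2 * Au) = 2 * (Au * sigma2 m E n (layer_adj n A k \<omega>))"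
            by (simp add: algebra_simps)
          have "\<Delta> \<le> sigma2 m E n (layer_adj n A k \<omega>) * (2 * Au)" using a e by linarith
          then show ?thesis using Ap by (simp add: pos_divide_le_eq)
        qed
        have sqp: "sqrt (real n) > 0" using Rp by simp
        have "sqrt (real n) * (\<Delta> / (2 * Au)) > C"
        proof -
          have "2 * Au * \<bar>C\<bar> / \<Delta> < sqrt (real n)" using big2 by linarith
          then have "2 * Au * \<bar>C\<bar> < sqrt (real n) * \<Delta>" using \<Delta> by (simp add: field_simps)
          moreover have Ap: "2 * Au > 0" using Au_ge1 by linarith
          ultimately have "\<bar>C\<bar> < sqrt (real n) * \<Delta> / (2 * Au)"
            by (simp add: pos_less_divide_eq mult.commute mult.left_commute)
          then have "\<bar>C\<bar> < sqrt (real n) * (\<Delta> / (2 * Au))" by simp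
          then show ?thesis by linarith
        qed
        moreover have "sqrt (real n) * (\<Delta> / (2 * Au)) \<le> sqrt (real n) * sigma2 m E n (layer_adj n A k \<omega>)"
          using sg sqp by (intro mult_left_mono) auto
        ultimately show False using hC by linarith
      qed
      have "measure M {\<omega> \<in> space M. sqrt (real n) * sigma2 m E n (layer_adj n A k \<omega>) \<le> C} \<le> measure M (S1 \<union> S2')"
        using sub S1s S2s by (intro finite_measure_mono) auto
      also have "\<dots> \<le> measure M S1 + measure M S2'" by (rule measure_Un_le[OF S1s S2s])
      also have "\<dots> \<le> 4 * real m ^ 6 / (real n * \<delta>\<^sup>2) + real m ^ 2 / (real n * \<delta>\<^sup>2)"
        unfolding S1_def S2'_def using conc_Y[OF n m \<delta>(1)] conc_X[OF n m \<delta>(1)] by (intro add_mono)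
      also have "\<dots> = B / real n" unfolding B_def using Rp \<delta> by (simp add: field_simps)
      finally show "measure M {\<omega> \<in> space M. sqrt (real n) * sigma2 m E n (layer_adj n A k \<omega>) \<le> C} \<le> B / real n" .
    qed
  qed
qed

end


theorem proposition6:
  fixes d m :: nat and E :: "(nat \<times> nat) set"
    and W :: "nat set \<Rightarrow> real \<Rightarrow> real \<Rightarrow> real"
    and M :: "'a measure" and \<xi> :: "nat \<Rightarrow> nat \<Rightarrow> 'a \<Rightarrow> real"
    and A :: "nat \<Rightarrow> nat \<Rightarrow> nat \<Rightarrow> nat \<Rightarrow> 'a \<Rightarrow> bool"
    and k :: "nat set"
  assumes "d \<ge> 1" and "m \<ge> 1" and "simple_graph m E"
    and "multigraphon d W"
    and "multiplex_model M d W \<xi> A"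
    and "AE \<omega> in M. (\<lambda>n. joint_cut_dist n d (\<lambda>j. layer_adj n A {j} \<omega>) W) \<longlonglongrightarrow> 0"
    and "k \<in> Lambda d"
  shows "(F_regular m E (W k) \<longrightarrow>
           (\<forall>\<epsilon>>0. (\<lambda>n. measure M {\<omega> \<in> space M.
              \<bar>sqrt (real n) * sigma2 m E n (layer_adj n A k \<omega>)\<bar> > \<epsilon>}) \<longlonglongrightarrow> 0)) \<and>
         (\<not> F_regular m E (W k) \<longrightarrow>
           (\<forall>C. (\<lambda>n. measure M {\<omega> \<in> space M.
              sqrt (real n) * sigma2 m E n (layer_adj n A k \<omega>) \<le> C}) \<longlonglongrightarrow> 0))"
proof -
  have gw: "graphon (W k)" using assms(4,7) by (simp add: multigraphon_def)
  interpret MF M d W \<xi> A k m E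
  proof unfold_locales
    show "multiplex_model M d W \<xi> A" by fact
    show "k \<in> Lambda d" by fact
    show "multigraphon d W" by fact
    show "graphon (W k)" by (rule gw)
    show "simple_graph m E" by fact
  qed
  show ?thesis using part1[OF assms(2)] part2[OF assms(2)] by blast
qed


end
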